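(* Let $(\Delta,R)$ be a gentle quiver, $\rho=(\alpha,\beta)\in R$ an isolated relation, and $(\Delta',R')$ the quiver with relations obtained from $(\Delta,R)$ by completing $\rho$. Then: (1) $(\Delta',R')$ is a gentle quiver if and only if $\mathbb Z\cdot\rho\neq\{\rho\}$ (here $\mathbb Z\cdot\rho$ is the $\Phi$-orbit of $\rho$ in $\mathcal N$). (2) If $\mathbb Z\cdot\rho\ne\{\rho\}$, then $\mathcal N_{(\Delta',R')}=\mathcal N_{(\Delta,R)}\setminus\{\rho\}$ and \[ \mathcal N_{(\Delta',R')}/\mathbb Z = \{\mathcal O'\in\mathcal N_{(\Delta,R)}/\mathbb Z \mid \mathcal O'\ne\mathbb Z\cdot\rho\}\cup\{(\mathbb Z\cdot\rho)\setminus\{\rho\}\}; \] moreover $\mathcal C_{(\Delta',R')}=\mathcal C_{(\Delta,R)}\cup\{\alpha,\beta,\gamma_\rho\}$ and $\mathcal C_{(\Delta',R')}/\mathbb Z=\mathcal C_{(\Delta,R)}/\mathbb Z\cup\{\{\alpha,\beta,\gamma_\rho\}\}$.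
   Context: A quiver $\Delta$ has finite vertex set $\Delta_0$, arrow set $\Delta_1$, maps $s,t$. A path of length $n\ge1$ is $(\alpha_1,\dots,\alpha_n)$ with $s\alpha_i=t\alpha_{i+1}$. A gentle quiver is $(\Delta,R)$ with $\Delta$ connected, $R$ a set of paths of length 2, such that: (1) each vertex is start of at most two arrows and end of at most two arrows; (2) for each arrow $\alpha$ at most one $\beta$ with $s\beta=t\alpha$, $(\beta,\alpha)\notin R$ and at most one $\gamma$ with $t\gamma=s\alpha$, $(\alpha,\gamma)\notin R$; (3) for each $\alpha$ at most one $\beta$ with $(\beta,\alpha)\in R$ and at most one $\gamma$ with $(\alpha,\gamma)\in R$; (4) for some $n$ every path of length $n$ has a subpath in $R$. Fix $\sigma,\tau:\Delta_1\to\{\pm1\}$ with distinct arrows of same start having opposite $\sigma$, distinct arrows of same end opposite $\tau$, and for $s\alpha=t\beta$: $(\alpha,\beta)\in R$ iff $\sigma\alpha=\tau\beta$; $\sigma\omega=\sigma\alpha_n,\tau\omega=\tau\alpha_1$. Permitted paths: no consecutive pair in $R$, plus trivial $1_{x,\varepsilon}$ ($s=t=x$, $\sigma=\varepsilon,\tau=-\varepsilon$); maximal if no arrow $\alpha$ with $s\alpha=t\omega,\sigma\alpha=-\tau\omega$ and no $\beta$ with $t\beta=s\omega,\tau\beta=-\sigma\omega$; set $\mathcal M$. Antipaths: all consecutive pairs in $R$, plus trivial $1'_{x,\varepsilon}$ ($\sigma=\tau=\varepsilon$); maximal if no $\alpha$ with $s\alpha=t\omega,\sigma\alpha=\tau\omega$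 and no $\beta$ with $t\beta=s\omega,\tau\beta=\sigma\omega$; set $\mathcal N$. $\phi:\mathcal M\to\mathcal N$, $\omega\mapsto$ unique $\omega'$ with $t\omega'=t\omega,\tau\omega'=-\tau\omega$; $\psi:\mathcal N\to\mathcal M$, $\omega\mapsto$ unique $\omega'$ with $s\omega'=s\omega,\sigma\omega'=-\sigma\omega$; $\Phi=\phi\psi$ acting on $\mathcal N$, orbit set $\mathcal N/\mathbb Z$. $\mathcal C$: arrows $\alpha$ with $(\alpha)$ not a subpath of a maximal antipath; $\Psi:\mathcal C\to\mathcal C$, $\alpha\mapsto$ unique $\beta\in\mathcal C$ with $t\beta=s\alpha,\tau\beta=\sigma\alpha$; orbit set $\mathcal C/\mathbb Z$. Subscripts indicate the gentle quiver these sets are formed in. A relation $(\alpha,\beta)\in R$ is isolated if the path $(\alpha,\beta)$ belongs to $\mathcal N$. For a set $R_0$ of isolated relations, the quiver obtained by completing the relations from $R_0$ is $(\Delta',R')$ with $\Delta'_0=\Delta_0$, $\Delta'_1=\Delta_1\cup\{\gamma_\rho\mid\rho\in R_0\}$ with new arrows $\gamma_\rho$, where for $\rho=(\alpha,\beta)$ the arrow $\gamma_\rho$ goes from $t\alpha$ to $s\beta$, and $R'=R\cup\{(\gamma_\rho,\alpha),(\beta,\gamma_\rho)\mid \rho=(\alpha,\beta)\in R_0\}$. *)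

theory Defs
  imports Main
begin

text \<open>A quiver with relations: vertices, arrows, source, target, relations
  (paths of length two, written (a,b) meaning the path a after b, i.e. src a = tgt b).\<close>
record ('v,'a) quiv =
  verts :: "'v set"
  arrs  :: "'a set"
  src   :: "'a \<Rightarrow> 'v"
  tgt   :: "'a \<Rightarrow> 'v"
  rels  :: "('a \<times> 'a) set"

definition at_most_one :: "('x \<Rightarrow> bool) \<Rightarrow> bool" where
  "at_most_one P \<longleftrightarrow> (\<forall>x y. P x \<and> P y \<longrightarrow> x = y)"

definition is_path :: "('v,'a) quiv \<Rightarrow> 'a list \<Rightarrow> bool" where
  "is_path Q ws \<longleftrightarrow> ws \<noteq> [] \<and> set ws \<subseteq> arrs Q \<and>
     (\<forall>i. Suc i < length ws \<longrightarrow> src Q (ws ! i) = tgt Q (ws ! Suc i))"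

definition connected_quiv :: "('v,'a) quiv \<Rightarrow> bool" where
  "connected_quiv Q \<longleftrightarrow> (\<forall>x\<in>verts Q. \<forall>y\<in>verts Q.
     (x, y) \<in> ({(src Q a, tgt Q a) | a. a \<in> arrs Q} \<union> {(tgt Q a, src Q a) | a. a \<in> arrs Q})\<^sup>*)"

definition gentle :: "('v,'a) quiv \<Rightarrow> bool" where
  "gentle Q \<longleftrightarrow>
     finite (verts Q) \<and>
     (\<forall>a\<in>arrs Q. src Q a \<in> verts Q \<and> tgt Q a \<in> verts Q) \<and>
     connected_quiv Q \<and>
     (\<forall>(a,b)\<in>rels Q. is_path Q [a, b]) \<and>
     (\<forall>x\<in>verts Q. finite {a\<in>arrs Q. src Q a = x} \<and> card {a\<in>arrs Q. src Q a = x} \<le> 2 \<and>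
                   finite {a\<in>arrs Q. tgt Q a = x} \<and> card {a\<in>arrs Q. tgt Q a = x} \<le> 2) \<and>
     (\<forall>a\<in>arrs Q.
        at_most_one (\<lambda>b. b \<in> arrs Q \<and> src Q b = tgt Q a \<and> (b, a) \<notin> rels Q) \<and>
        at_most_one (\<lambda>c. c \<in> arrs Q \<and> tgt Q c = src Q a \<and> (a, c) \<notin> rels Q)) \<and>
     (\<forall>a\<in>arrs Q. at_most_one (\<lambda>b. (b, a) \<in> rels Q) \<and> at_most_one (\<lambda>c. (a, c) \<in> rels Q)) \<and>
     (\<exists>n\<ge>1. \<forall>ws. is_path Q ws \<and> length ws = n \<longrightarrow>
        (\<exists>i. Suc i < n \<and> (ws ! i, ws ! Suc i) \<in> rels Q))"

definition sign_fns :: "('v,'a) quiv \<Rightarrow> ('a \<Rightarrow> int) \<Rightarrow> ('a \<Rightarrow> int) \<Rightarrow> bool" where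
  "sign_fns Q \<sigma> \<tau> \<longleftrightarrow>
     (\<forall>a\<in>arrs Q. \<sigma> a \<in> {1, -1} \<and> \<tau> a \<in> {1, -1}) \<and>
     (\<forall>a\<in>arrs Q. \<forall>b\<in>arrs Q. a \<noteq> b \<and> src Q a = src Q b \<longrightarrow> \<sigma> a = - \<sigma> b) \<and>
     (\<forall>a\<in>arrs Q. \<forall>b\<in>arrs Q. a \<noteq> b \<and> tgt Q a = tgt Q b \<longrightarrow> \<tau> a = - \<tau> b) \<and>
     (\<forall>a\<in>arrs Q. \<forall>b\<in>arrs Q. src Q a = tgt Q b \<longrightarrow> ((a, b) \<in> rels Q \<longleftrightarrow> \<sigma> a = \<tau> b))"

text \<open>Paths: trivial permitted paths 1_{x,e}, trivial antipaths 1'_{x,e}, and nontrivial paths.\<close>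
datatype ('v,'a) gpath = PTriv 'v int | ATriv 'v int | Path "'a list"

fun gsrc :: "('v,'a) quiv \<Rightarrow> ('v,'a) gpath \<Rightarrow> 'v" where
  "gsrc Q (PTriv x e) = x"
| "gsrc Q (ATriv x e) = x"
| "gsrc Q (Path ws) = src Q (last ws)"

fun gtgt :: "('v,'a) quiv \<Rightarrow> ('v,'a) gpath \<Rightarrow> 'v" where
  "gtgt Q (PTriv x e) = x"
| "gtgt Q (ATriv x e) = x"
| "gtgt Q (Path ws) = tgt Q (hd ws)"

fun gsig :: "('a \<Rightarrow> int) \<Rightarrow> ('v,'a) gpath \<Rightarrow> int" where
  "gsig \<sigma> (PTriv x e) = e"
| "gsig \<sigma> (ATriv x e) = e"
| "gsig \<sigma> (Path ws) = \<sigma> (last ws)"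

fun gtau :: "('a \<Rightarrow> int) \<Rightarrow> ('v,'a) gpath \<Rightarrow> int" where
  "gtau \<tau> (PTriv x e) = - e"
| "gtau \<tau> (ATriv x e) = e"
| "gtau \<tau> (Path ws) = \<tau> (hd ws)"

definition permitted :: "('v,'a) quiv \<Rightarrow> ('v,'a) gpath \<Rightarrow> bool" where
  "permitted Q p = (case p of
      PTriv x e \<Rightarrow> x \<in> verts Q \<and> e \<in> {1, -1}
    | ATriv x e \<Rightarrow> False
    | Path ws \<Rightarrow> is_path Q ws \<and> (\<forall>i. Suc i < length ws \<longrightarrow> (ws ! i, ws ! Suc i) \<notin> rels Q))"

definition antipath :: "('v,'a) quiv \<Rightarrow> ('v,'a) gpath \<Rightarrow> bool" where
  "antipath Q p = (case p of
      PTriv x e \<Rightarrow> False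
    | ATriv x e \<Rightarrow> x \<in> verts Q \<and> e \<in> {1, -1}
    | Path ws \<Rightarrow> is_path Q ws \<and> (\<forall>i. Suc i < length ws \<longrightarrow> (ws ! i, ws ! Suc i) \<in> rels Q))"

text \<open>Maximal permitted paths (the set M) and maximal antipaths (the set N).\<close>
definition Mset :: "('v,'a) quiv \<Rightarrow> ('a \<Rightarrow> int) \<Rightarrow> ('a \<Rightarrow> int) \<Rightarrow> ('v,'a) gpath set" where
  "Mset Q \<sigma> \<tau> = {p. permitted Q p \<and>
      \<not> (\<exists>a\<in>arrs Q. src Q a = gtgt Q p \<and> \<sigma> a = - gtau \<tau> p) \<and>
      \<not> (\<exists>b\<in>arrs Q. tgt Q b = gsrc Q p \<and> \<tau> b = - gsig \<sigma> p)}"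

definition Nset :: "('v,'a) quiv \<Rightarrow> ('a \<Rightarrow> int) \<Rightarrow> ('a \<Rightarrow> int) \<Rightarrow> ('v,'a) gpath set" where
  "Nset Q \<sigma> \<tau> = {p. antipath Q p \<and>
      \<not> (\<exists>a\<in>arrs Q. src Q a = gtgt Q p \<and> \<sigma> a = gtau \<tau> p) \<and>
      \<not> (\<exists>b\<in>arrs Q. tgt Q b = gsrc Q p \<and> \<tau> b = gsig \<sigma> p)}"

definition phi :: "('v,'a) quiv \<Rightarrow> ('a \<Rightarrow> int) \<Rightarrow> ('a \<Rightarrow> int) \<Rightarrow> ('v,'a) gpath \<Rightarrow> ('v,'a) gpath" where
  "phi Q \<sigma> \<tau> p = (THE q. q \<in> Nset Q \<sigma> \<tau> \<and> gtgt Q q = gtgt Q p \<and> gtau \<tau> q = - gtau \<tau> p)"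

definition psi :: "('v,'a) quiv \<Rightarrow> ('a \<Rightarrow> int) \<Rightarrow> ('a \<Rightarrow> int) \<Rightarrow> ('v,'a) gpath \<Rightarrow> ('v,'a) gpath" where
  "psi Q \<sigma> \<tau> p = (THE q. q \<in> Mset Q \<sigma> \<tau> \<and> gsrc Q q = gsrc Q p \<and> gsig \<sigma> q = - gsig \<sigma> p)"

definition Phi :: "('v,'a) quiv \<Rightarrow> ('a \<Rightarrow> int) \<Rightarrow> ('a \<Rightarrow> int) \<Rightarrow> ('v,'a) gpath \<Rightarrow> ('v,'a) gpath" where
  "Phi Q \<sigma> \<tau> = phi Q \<sigma> \<tau> \<circ> psi Q \<sigma> \<tau>"

definition orbit_on :: "'x set \<Rightarrow> ('x \<Rightarrow> 'x) \<Rightarrow> 'x \<Rightarrow> 'x set" where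
  "orbit_on A f x = {y \<in> A. \<exists>n. (f ^^ n) x = y \<or> (f ^^ n) y = x}"

definition Norbits :: "('v,'a) quiv \<Rightarrow> ('a \<Rightarrow> int) \<Rightarrow> ('a \<Rightarrow> int) \<Rightarrow> ('v,'a) gpath set set" where
  "Norbits Q \<sigma> \<tau> = (\<lambda>x. orbit_on (Nset Q \<sigma> \<tau>) (Phi Q \<sigma> \<tau>) x) ` Nset Q \<sigma> \<tau>"

definition Cset :: "('v,'a) quiv \<Rightarrow> ('a \<Rightarrow> int) \<Rightarrow> ('a \<Rightarrow> int) \<Rightarrow> 'a set" where
  "Cset Q \<sigma> \<tau> = {a \<in> arrs Q. \<not> (\<exists>ws us vs. Path ws \<in> Nset Q \<sigma> \<tau> \<and> ws = us @ [a] @ vs)}"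

definition Psi :: "('v,'a) quiv \<Rightarrow> ('a \<Rightarrow> int) \<Rightarrow> ('a \<Rightarrow> int) \<Rightarrow> 'a \<Rightarrow> 'a" where
  "Psi Q \<sigma> \<tau> a = (THE b. b \<in> Cset Q \<sigma> \<tau> \<and> tgt Q b = src Q a \<and> \<tau> b = \<sigma> a)"

definition Corbits :: "('v,'a) quiv \<Rightarrow> ('a \<Rightarrow> int) \<Rightarrow> ('a \<Rightarrow> int) \<Rightarrow> 'a set set" where
  "Corbits Q \<sigma> \<tau> = (\<lambda>x. orbit_on (Cset Q \<sigma> \<tau>) (Psi Q \<sigma> \<tau>) x) ` Cset Q \<sigma> \<tau>"

definition isolated :: "('v,'a) quiv \<Rightarrow> ('a \<Rightarrow> int) \<Rightarrow> ('a \<Rightarrow> int) \<Rightarrow> 'a \<Rightarrow> 'a \<Rightarrow> bool" where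
  "isolated Q \<sigma> \<tau> a b \<longleftrightarrow> (a, b) \<in> rels Q \<and> Path [a, b] \<in> Nset Q \<sigma> \<tau>"

definition complete :: "('v,'a) quiv \<Rightarrow> 'a \<Rightarrow> 'a \<Rightarrow> 'a \<Rightarrow> ('v,'a) quiv" where
  "complete Q a b g = Q\<lparr> arrs := insert g (arrs Q),
                         src := (src Q)(g := tgt Q a),
                         tgt := (tgt Q)(g := src Q b),
                         rels := rels Q \<union> {(g, a), (b, g)} \<rparr>"

end

theory Submission
  imports Defs
begin


lemma chain_unique:
  assumes "successively P r" "successively P r'" "r \<noteq> []" "r' \<noteq> []" "hd r = hd r'"
    and "\<And>x y z. P x y \<Longrightarrow> P x z \<Longrightarrow> y = z"
    and "\<not> (\<exists>y. P (last r) y)" "\<not> (\<exists>y. P (last r') y)"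
  shows "r = r'"
  using assms
proof (induction r arbitrary: r')
  case Nil then show ?case by simp
next
  case (Cons x xs)
  then obtain ys where r': "r' = x # ys" by (cases r') auto
  show ?case
  proof (cases xs)
    case Nil
    then show ?thesis using Cons r' by (cases ys) auto
  next
    case (Cons u us)
    have ys: "ys \<noteq> []" using Cons.prems r' \<open>xs = u # us\<close> by auto
    then obtain v vs where ys': "ys = v # vs" by (cases ys) auto
    have "P x u" "P x v" using Cons.prems r' \<open>xs = u # us\<close> ys' by auto
    then have "u = v" using Cons.prems(6) by blast
    have "xs = ys"
      apply (rule Cons.IH)
      using Cons.prems r' \<open>xs = u # us\<close> ys' \<open>u = v\<close> by auto
    then show ?thesis using r' by simp
  qed
qed

lemma chain_long:
  assumes "\<And>r. successively P r \<Longrightarrow> r \<noteq> [] \<Longrightarrow> hd r = a \<Longrightarrow> \<exists>y. P (last r) y"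
  shows "\<exists>r. successively P r \<and> r \<noteq> [] \<and> hd r = a \<and> length r = Suc k"
proof (induction k)
  case 0 then show ?case by (intro exI[of _ "[a]"]) auto
next
  case (Suc k)
  then obtain r where r: "successively P r" "r \<noteq> []" "hd r = a" "length r = Suc k" by blast
  then obtain y where "P (last r) y" using assms by blast
  then show ?case using r
    by (intro exI[of _ "r @ [y]"]) (auto simp: successively_append_iff)
qed

lemma chain_exists:
  assumes "\<And>r. successively P r \<Longrightarrow> r \<noteq> [] \<Longrightarrow> hd r = a \<Longrightarrow> length r < n"
  shows "\<exists>r. successively P r \<and> r \<noteq> [] \<and> hd r = a \<and> \<not> (\<exists>y. P (last r) y)"
proof (rule ccontr)
  assume "\<not> ?thesis"
  then have "\<And>r. successively P r \<Longrightarrow> r \<noteq> [] \<Longrightarrow> hd r = a \<Longrightarrow> \<exists>y. P (last r) y" by blast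
  from chain_long[of P a n, OF this] obtain r where
    "successively P r" "r \<noteq> []" "hd r = a" "length r = Suc n" by blast
  with assms[of r] show False by simp
qed

lemma chain_distinct:
  assumes "successively P r" "r \<noteq> []"
    and inj: "\<And>x y z. P x z \<Longrightarrow> P y z \<Longrightarrow> x = y"
    and start: "\<not> (\<exists>c. P c (hd r))"
  shows "distinct r"
  using assms(1,2) start
proof (induction r rule: rev_induct)
  case Nil then show ?case by simp
next
  case (snoc y xs)
  show ?case
  proof (cases "xs = []")
    case True then show ?thesis by simp
  next
    case False
    have sx: "successively P xs" and Pl: "P (last xs) y"
      using snoc.prems(1) False by (auto simp: successively_append_iff)
    have hd: "hd (xs @ [y]) = hd xs" using False by simp
    have dx: "distinct xs" 
      apply (rule snoc.IH[OF sx False])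
      using snoc.prems(3) hd by simp
    have "y \<notin> set xs"
    proof
      assume "y \<in> set xs"
      then obtain k where k: "k < length xs" "xs ! k = y" by (auto simp: in_set_conv_nth)
      show False
      proof (cases k)
        case 0
        then have "hd xs = y" using k False by (simp add: hd_conv_nth)
        then show False using snoc.prems(3) Pl hd by metis
      next
        case (Suc j)
        have "P (xs ! j) (xs ! k)" using successively_nth[OF sx, of j] k Suc by simp
        then have "xs ! j = last xs" using Pl k(2) inj by metis
        also have "last xs = xs ! (length xs - 1)" using False by (simp add: last_conv_nth)
        finally have "xs ! j = xs ! (length xs - 1)" .
        then have "j = length xs - 1" using dx k Suc nth_eq_iff_index_eq[OF dx, of j "length xs - 1"]
          by (metis False Suc_lessD diff_less length_greater_0_conv zero_less_one)
        then show False using k Suc by simp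
      qed
    qed
    then show ?thesis using dx by simp
  qed
qed

definition sq :: "('v,'a) quiv \<Rightarrow> ('a \<Rightarrow> int) \<Rightarrow> ('a \<Rightarrow> int) \<Rightarrow> bool" where
  "sq Q \<sigma> \<tau> \<longleftrightarrow> sign_fns Q \<sigma> \<tau> \<and>
     (\<forall>a b. (a,b) \<in> rels Q \<longrightarrow> a \<in> arrs Q \<and> b \<in> arrs Q \<and> src Q a = tgt Q b) \<and>
     (\<forall>a\<in>arrs Q. src Q a \<in> verts Q \<and> tgt Q a \<in> verts Q)"

lemma is_path_succ:
  "is_path Q ws \<longleftrightarrow> ws \<noteq> [] \<and> set ws \<subseteq> arrs Q \<and> successively (\<lambda>a b. src Q a = tgt Q b) ws"
  unfolding is_path_def successively_conv_nth by blast

lemma permitted_Path: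
  "permitted Q (Path ws) \<longleftrightarrow> ws \<noteq> [] \<and> set ws \<subseteq> arrs Q \<and>
     successively (\<lambda>a b. src Q a = tgt Q b \<and> (a,b) \<notin> rels Q) ws"
  unfolding permitted_def is_path_def successively_conv_nth by auto

lemma antipath_Path:
  "antipath Q (Path ws) \<longleftrightarrow> ws \<noteq> [] \<and> set ws \<subseteq> arrs Q \<and>
     successively (\<lambda>a b. src Q a = tgt Q b \<and> (a,b) \<in> rels Q) ws"
  unfolding antipath_def is_path_def successively_conv_nth by auto

lemma Nset_iff: "p \<in> Nset Q \<sigma> \<tau> \<longleftrightarrow> antipath Q p \<and>
      \<not> (\<exists>a\<in>arrs Q. src Q a = gtgt Q p \<and> \<sigma> a = gtau \<tau> p) \<and>
      \<not> (\<exists>b\<in>arrs Q. tgt Q b = gsrc Q p \<and> \<tau> b = gsig \<sigma> p)"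
  unfolding Nset_def by simp

lemma Mset_iff: "p \<in> Mset Q \<sigma> \<tau> \<longleftrightarrow> permitted Q p \<and>
      \<not> (\<exists>a\<in>arrs Q. src Q a = gtgt Q p \<and> \<sigma> a = - gtau \<tau> p) \<and>
      \<not> (\<exists>b\<in>arrs Q. tgt Q b = gsrc Q p \<and> \<tau> b = - gsig \<sigma> p)"
  unfolding Mset_def by simp

lemma pm_neg: "(x::int) \<in> {1,-1} \<Longrightarrow> y \<in> {1,-1} \<Longrightarrow> x \<noteq> y \<longleftrightarrow> x = - y"
  by auto

context
  fixes Q :: "('v,'a) quiv" and \<sigma> \<tau> :: "'a \<Rightarrow> int"
  assumes sq: "sq Q \<sigma> \<tau>"
begin

lemma sf: "sign_fns Q \<sigma> \<tau>" using sq unfolding sq_def by blast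

lemma sig_pm: "a \<in> arrs Q \<Longrightarrow> \<sigma> a \<in> {1,-1}" and tau_pm: "a \<in> arrs Q \<Longrightarrow> \<tau> a \<in> {1,-1}"
  using sf unfolding sign_fns_def by auto

lemma out_unique: "a \<in> arrs Q \<Longrightarrow> b \<in> arrs Q \<Longrightarrow> src Q a = src Q b \<Longrightarrow> \<sigma> a = \<sigma> b \<Longrightarrow> a = b"
proof (rule ccontr)
  assume A: "a \<in> arrs Q" "b \<in> arrs Q" "src Q a = src Q b" "\<sigma> a = \<sigma> b" "a \<noteq> b"
  then have "\<sigma> a = - \<sigma> b" using sf unfolding sign_fns_def by blast
  then show False using A(4) sig_pm[OF A(1)] by auto
qed

lemma in_unique: "a \<in> arrs Q \<Longrightarrow> b \<in> arrs Q \<Longrightarrow> tgt Q a = tgt Q b \<Longrightarrow> \<tau> a = \<tau> b \<Longrightarrow> a = b"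
proof (rule ccontr)
  assume A: "a \<in> arrs Q" "b \<in> arrs Q" "tgt Q a = tgt Q b" "\<tau> a = \<tau> b" "a \<noteq> b"
  then have "\<tau> a = - \<tau> b" using sf unfolding sign_fns_def by blast
  then show False using A(4) tau_pm[OF A(1)] by auto
qed

lemma rel_iff: "(a,b) \<in> rels Q \<longleftrightarrow> a \<in> arrs Q \<and> b \<in> arrs Q \<and> src Q a = tgt Q b \<and> \<sigma> a = \<tau> b"
proof
  assume "(a,b) \<in> rels Q"
  moreover then have "a \<in> arrs Q \<and> b \<in> arrs Q \<and> src Q a = tgt Q b" using sq unfolding sq_def by blast
  ultimately show "a \<in> arrs Q \<and> b \<in> arrs Q \<and> src Q a = tgt Q b \<and> \<sigma> a = \<tau> b"
    using sf unfolding sign_fns_def by blast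
next
  assume "a \<in> arrs Q \<and> b \<in> arrs Q \<and> src Q a = tgt Q b \<and> \<sigma> a = \<tau> b"
  then show "(a,b) \<in> rels Q" using sf unfolding sign_fns_def by blast
qed

lemma nrel_iff: "a \<in> arrs Q \<Longrightarrow> b \<in> arrs Q \<Longrightarrow> src Q a = tgt Q b \<Longrightarrow> (a,b) \<notin> rels Q \<longleftrightarrow> \<sigma> a = - \<tau> b"
  using rel_iff[of a b] sig_pm[of a] tau_pm[of b] by auto

lemma verts_arr: "a \<in> arrs Q \<Longrightarrow> src Q a \<in> verts Q \<and> tgt Q a \<in> verts Q"
  using sq unfolding sq_def by blast

end


definition Pstep :: "('v,'a) quiv \<Rightarrow> 'a \<Rightarrow> 'a \<Rightarrow> bool" where
  "Pstep Q a b \<longleftrightarrow> a \<in> arrs Q \<and> b \<in> arrs Q \<and> src Q a = tgt Q b \<and> (a,b) \<notin> rels Q"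

context
  fixes Q :: "('v,'a) quiv" and \<sigma> \<tau> :: "'a \<Rightarrow> int"
  assumes sq: "sq Q \<sigma> \<tau>"
begin

lemma relfun: "(\<lambda>a b. src Q a = tgt Q b \<and> (a,b) \<in> rels Q) = (\<lambda>a b. (a,b) \<in> rels Q)"
  using rel_iff[OF sq] by (intro ext) blast

lemma antipath_Path':
  "antipath Q (Path ws) \<longleftrightarrow> ws \<noteq> [] \<and> set ws \<subseteq> arrs Q \<and>
     successively (\<lambda>a b. (a,b) \<in> rels Q) ws"
  unfolding antipath_Path relfun by simp


lemma permitted_Path':
  "permitted Q (Path ws) \<longleftrightarrow> ws \<noteq> [] \<and> set ws \<subseteq> arrs Q \<and> successively (Pstep Q) ws"
proof -
  have "set ws \<subseteq> arrs Q \<Longrightarrow> successively (\<lambda>a b. src Q a = tgt Q b \<and> (a,b) \<notin> rels Q) ws = successively (Pstep Q) ws"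
    by (rule successively_cong) (auto simp: Pstep_def)
  then show ?thesis unfolding permitted_Path by blast
qed

lemma Pstep_fun: assumes "Pstep Q x y" "Pstep Q x z" shows "y = z"
proof -
  have A: "x \<in> arrs Q" "y \<in> arrs Q" "z \<in> arrs Q" "src Q x = tgt Q y" "src Q x = tgt Q z"
    "(x,y) \<notin> rels Q" "(x,z) \<notin> rels Q" using assms unfolding Pstep_def by auto
  have "\<sigma> x = - \<tau> y" "\<sigma> x = - \<tau> z" using nrel_iff[OF sq] A by auto
  then show ?thesis using in_unique[OF sq] A by auto
qed

lemma Pstep_inj: assumes "Pstep Q x z" "Pstep Q y z" shows "x = y"
proof -
  have A: "x \<in> arrs Q" "y \<in> arrs Q" "z \<in> arrs Q" "src Q x = tgt Q z" "src Q y = tgt Q z"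
    "(x,z) \<notin> rels Q" "(y,z) \<notin> rels Q" using assms unfolding Pstep_def by auto
  have "\<sigma> x = - \<tau> z" "\<sigma> y = - \<tau> z" using nrel_iff[OF sq] A by auto
  then show ?thesis using out_unique[OF sq] A by auto
qed

lemma hdl: "ws \<noteq> [] \<Longrightarrow> set ws \<subseteq> arrs Q \<Longrightarrow> hd ws \<in> arrs Q \<and> last ws \<in> arrs Q"
  by auto

lemma R_fun: "(x,y) \<in> rels Q \<Longrightarrow> (x,z) \<in> rels Q \<Longrightarrow> y = z"
  using rel_iff[OF sq] in_unique[OF sq] by metis

lemma R_inj: "(x,z) \<in> rels Q \<Longrightarrow> (y,z) \<in> rels Q \<Longrightarrow> x = y"
  using rel_iff[OF sq] out_unique[OF sq] by metis

lemma N_Path: "Path ws \<in> Nset Q \<sigma> \<tau> \<longleftrightarrow> ws \<noteq> [] \<and> set ws \<subseteq> arrs Q \<and>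
     successively (\<lambda>a b. (a,b) \<in> rels Q) ws \<and>
     \<not> (\<exists>a. (a, hd ws) \<in> rels Q) \<and> \<not> (\<exists>b. (last ws, b) \<in> rels Q)"
proof -
  have E1: "(\<exists>a\<in>arrs Q. src Q a = tgt Q (hd ws) \<and> \<sigma> a = \<tau> (hd ws)) \<longleftrightarrow> (\<exists>a. (a, hd ws) \<in> rels Q)"
    if "hd ws \<in> arrs Q" using that rel_iff[OF sq] by blast
  have E2: "(\<exists>b\<in>arrs Q. tgt Q b = src Q (last ws) \<and> \<tau> b = \<sigma> (last ws)) \<longleftrightarrow> (\<exists>b. (last ws, b) \<in> rels Q)"
    if "last ws \<in> arrs Q" using that rel_iff[OF sq] by (metis (no_types, lifting))
  show ?thesis
    unfolding Nset_iff antipath_Path' using E1 E2 hdl by auto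
qed

lemma M_Path: "Path ws \<in> Mset Q \<sigma> \<tau> \<longleftrightarrow> ws \<noteq> [] \<and> set ws \<subseteq> arrs Q \<and>
     successively (Pstep Q) ws \<and>
     \<not> (\<exists>a. Pstep Q a (hd ws)) \<and> \<not> (\<exists>b. Pstep Q (last ws) b)"
proof -
  have E1: "(\<exists>a\<in>arrs Q. src Q a = tgt Q (hd ws) \<and> \<sigma> a = - \<tau> (hd ws)) \<longleftrightarrow> (\<exists>a. Pstep Q a (hd ws))"
    if "hd ws \<in> arrs Q" using that nrel_iff[OF sq] unfolding Pstep_def by blast
  have E2: "(\<exists>b\<in>arrs Q. tgt Q b = src Q (last ws) \<and> \<tau> b = - \<sigma> (last ws)) \<longleftrightarrow> (\<exists>b. Pstep Q (last ws) b)"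
    if "last ws \<in> arrs Q" using that nrel_iff[OF sq] unfolding Pstep_def
    by (metis (no_types, lifting) equation_minus_iff)
  show ?thesis
    unfolding Mset_iff permitted_Path' using E1 E2 hdl by auto
qed

lemma N_unique_T:
  assumes "p \<in> Nset Q \<sigma> \<tau>" "p' \<in> Nset Q \<sigma> \<tau>" "gtgt Q p = gtgt Q p'" "gtau \<tau> p = gtau \<tau> p'"
  shows "p = p'"
proof (cases p)
  case (PTriv x e) then show ?thesis using assms by (simp add: Nset_iff antipath_def)
next
  case (ATriv x e)
  show ?thesis
  proof (cases p')
    case (PTriv x' e') then show ?thesis using assms by (simp add: Nset_iff antipath_def)
  next
    case (ATriv x' e') then show ?thesis using assms \<open>p = ATriv x e\<close> by simp
  next
    case (Path ws')
    then have "ws' \<noteq> []" "set ws' \<subseteq> arrs Q" using assms(2) by (auto simp: Nset_iff antipath_Path')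
    then have "hd ws' \<in> arrs Q" by auto
    then show ?thesis using assms \<open>p = ATriv x e\<close> Path by (auto simp: Nset_iff)
  qed
next
  case (Path ws)
  have A: "ws \<noteq> []" "set ws \<subseteq> arrs Q" "successively (\<lambda>a b. (a,b) \<in> rels Q) ws"
    "\<not> (\<exists>b. (last ws, b) \<in> rels Q)"
    using assms(1) Path N_Path by auto
  show ?thesis
  proof (cases p')
    case (PTriv x' e') then show ?thesis using assms by (simp add: Nset_iff antipath_def)
  next
    case (ATriv x' e')
    have "hd ws \<in> arrs Q" using A by auto
    then show ?thesis using assms Path ATriv by (auto simp: Nset_iff)
  next
    case (Path ws')
    have B: "ws' \<noteq> []" "set ws' \<subseteq> arrs Q" "successively (\<lambda>a b. (a,b) \<in> rels Q) ws'"
      "\<not> (\<exists>b. (last ws', b) \<in> rels Q)"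
      using assms(2) Path N_Path by auto
    have "hd ws = hd ws'" using A B assms \<open>p = Path ws\<close> Path in_unique[OF sq] hdl[OF A(1,2)] hdl[OF B(1,2)] by simp
    then have "ws = ws'" by (intro chain_unique[OF A(3) B(3) A(1) B(1)]) (use A(4) B(4) R_fun in auto)
    then show ?thesis using \<open>p = Path ws\<close> Path by simp
  qed
qed

lemma N_unique_S:
  assumes "p \<in> Nset Q \<sigma> \<tau>" "p' \<in> Nset Q \<sigma> \<tau>" "gsrc Q p = gsrc Q p'" "gsig \<sigma> p = gsig \<sigma> p'"
  shows "p = p'"
proof (cases p)
  case (PTriv x e) then show ?thesis using assms by (simp add: Nset_iff antipath_def)
next
  case (ATriv x e)
  show ?thesis
  proof (cases p')
    case (PTriv x' e') then show ?thesis using assms by (simp add: Nset_iff antipath_def)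
  next
    case (ATriv x' e') then show ?thesis using assms \<open>p = ATriv x e\<close> by simp
  next
    case (Path ws')
    then have "ws' \<noteq> []" "set ws' \<subseteq> arrs Q" using assms(2) by (auto simp: Nset_iff antipath_Path')
    then have "last ws' \<in> arrs Q" by auto
    then show ?thesis using assms \<open>p = ATriv x e\<close> Path by (auto simp: Nset_iff)
  qed
next
  case (Path ws)
  have A: "ws \<noteq> []" "set ws \<subseteq> arrs Q" "successively (\<lambda>a b. (a,b) \<in> rels Q) ws"
    "\<not> (\<exists>b. (b, hd ws) \<in> rels Q)"
    using assms(1) Path N_Path by auto
  show ?thesis
  proof (cases p')
    case (PTriv x' e') then show ?thesis using assms by (simp add: Nset_iff antipath_def)
  next
    case (ATriv x' e')
    have "last ws \<in> arrs Q" using A by auto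
    then show ?thesis using assms Path ATriv by (auto simp: Nset_iff)
  next
    case (Path ws')
    have B: "ws' \<noteq> []" "set ws' \<subseteq> arrs Q" "successively (\<lambda>a b. (a,b) \<in> rels Q) ws'"
      "\<not> (\<exists>b. (b, hd ws') \<in> rels Q)"
      using assms(2) Path N_Path by auto
    have "last ws = last ws'" using A B assms \<open>p = Path ws\<close> Path out_unique[OF sq] hdl[OF A(1,2)] hdl[OF B(1,2)] by simp
    have C: "successively (\<lambda>a b. (b,a) \<in> rels Q) (rev ws)" "successively (\<lambda>a b. (b,a) \<in> rels Q) (rev ws')"
      using A B by simp_all
    have "rev ws = rev ws'"
      apply (rule chain_unique[OF C])
      using A B \<open>last ws = last ws'\<close> R_inj by (auto simp: hd_rev last_rev)
    then show ?thesis using \<open>p = Path ws\<close> Path by simp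
  qed
qed

lemma M_unique_T:
  assumes "p \<in> Mset Q \<sigma> \<tau>" "p' \<in> Mset Q \<sigma> \<tau>" "gtgt Q p = gtgt Q p'" "gtau \<tau> p = gtau \<tau> p'"
  shows "p = p'"
proof (cases p)
  case (ATriv x e) then show ?thesis using assms by (simp add: Mset_iff permitted_def)
next
  case (PTriv x e)
  show ?thesis
  proof (cases p')
    case (ATriv x' e') then show ?thesis using assms by (simp add: Mset_iff permitted_def)
  next
    case (PTriv x' e') then show ?thesis using assms \<open>p = PTriv x e\<close> by simp
  next
    case (Path ws')
    then have "ws' \<noteq> []" "set ws' \<subseteq> arrs Q" using assms(2) by (auto simp: Mset_iff permitted_Path')
    then have "hd ws' \<in> arrs Q" by auto
    then show ?thesis using assms \<open>p = PTriv x e\<close> Path by (auto simp: Mset_iff)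
  qed
next
  case (Path ws)
  have A: "ws \<noteq> []" "set ws \<subseteq> arrs Q" "successively (Pstep Q) ws" "\<not> (\<exists>b. Pstep Q (last ws) b)"
    using assms(1) Path M_Path by auto
  show ?thesis
  proof (cases p')
    case (ATriv x' e') then show ?thesis using assms by (simp add: Mset_iff permitted_def)
  next
    case (PTriv x' e')
    have "hd ws \<in> arrs Q" using A by auto
    then show ?thesis using assms Path PTriv by (auto simp: Mset_iff)
  next
    case (Path ws')
    have B: "ws' \<noteq> []" "set ws' \<subseteq> arrs Q" "successively (Pstep Q) ws'" "\<not> (\<exists>b. Pstep Q (last ws') b)"
      using assms(2) Path M_Path by auto
    have "hd ws = hd ws'" using A B assms \<open>p = Path ws\<close> Path in_unique[OF sq] hdl[OF A(1,2)] hdl[OF B(1,2)] by simp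
    then have "ws = ws'" by (intro chain_unique[OF A(3) B(3) A(1) B(1)]) (use A(4) B(4) Pstep_fun in auto)
    then show ?thesis using \<open>p = Path ws\<close> Path by simp
  qed
qed

lemma M_unique_S:
  assumes "p \<in> Mset Q \<sigma> \<tau>" "p' \<in> Mset Q \<sigma> \<tau>" "gsrc Q p = gsrc Q p'" "gsig \<sigma> p = gsig \<sigma> p'"
  shows "p = p'"
proof (cases p)
  case (ATriv x e) then show ?thesis using assms by (simp add: Mset_iff permitted_def)
next
  case (PTriv x e)
  show ?thesis
  proof (cases p')
    case (ATriv x' e') then show ?thesis using assms by (simp add: Mset_iff permitted_def)
  next
    case (PTriv x' e') then show ?thesis using assms \<open>p = PTriv x e\<close> by simp
  next
    case (Path ws')
    then have "ws' \<noteq> []" "set ws' \<subseteq> arrs Q" using assms(2) by (auto simp: Mset_iff permitted_Path')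
    then have "last ws' \<in> arrs Q" by auto
    then show ?thesis using assms \<open>p = PTriv x e\<close> Path by (auto simp: Mset_iff)
  qed
next
  case (Path ws)
  have A: "ws \<noteq> []" "set ws \<subseteq> arrs Q" "successively (Pstep Q) ws" "\<not> (\<exists>b. Pstep Q b (hd ws))"
    using assms(1) Path M_Path by auto
  show ?thesis
  proof (cases p')
    case (ATriv x' e') then show ?thesis using assms by (simp add: Mset_iff permitted_def)
  next
    case (PTriv x' e')
    have "last ws \<in> arrs Q" using A by auto
    then show ?thesis using assms Path PTriv by (auto simp: Mset_iff)
  next
    case (Path ws')
    have B: "ws' \<noteq> []" "set ws' \<subseteq> arrs Q" "successively (Pstep Q) ws'" "\<not> (\<exists>b. Pstep Q b (hd ws'))"
      using assms(2) Path M_Path by auto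
    have "last ws = last ws'" using A B assms \<open>p = Path ws\<close> Path out_unique[OF sq] hdl[OF A(1,2)] hdl[OF B(1,2)] by simp
    have C: "successively (\<lambda>a b. Pstep Q b a) (rev ws)" "successively (\<lambda>a b. Pstep Q b a) (rev ws')"
      using A B by simp_all
    have "rev ws = rev ws'"
      apply (rule chain_unique[OF C])
      using A B \<open>last ws = last ws'\<close> Pstep_inj by (auto simp: hd_rev last_rev)
    then show ?thesis using \<open>p = Path ws\<close> Path by simp
  qed
qed

end


lemma gD1: "gentle Q \<Longrightarrow> finite (verts Q)"
  unfolding gentle_def by (erule conjunct1)
lemma gD2: "gentle Q \<Longrightarrow> \<forall>a\<in>arrs Q. src Q a \<in> verts Q \<and> tgt Q a \<in> verts Q"
  unfolding gentle_def by (drule conjunct2, erule conjunct1)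
lemma gD3: "gentle Q \<Longrightarrow> connected_quiv Q"
  unfolding gentle_def by (drule conjunct2, drule conjunct2, erule conjunct1)
lemma gD4: "gentle Q \<Longrightarrow> \<forall>(a,b)\<in>rels Q. is_path Q [a, b]"
  unfolding gentle_def by (drule conjunct2, drule conjunct2, drule conjunct2, erule conjunct1)
lemma gD5: "gentle Q \<Longrightarrow> \<forall>x\<in>verts Q. finite {a\<in>arrs Q. src Q a = x} \<and> card {a\<in>arrs Q. src Q a = x} \<le> 2 \<and>
                   finite {a\<in>arrs Q. tgt Q a = x} \<and> card {a\<in>arrs Q. tgt Q a = x} \<le> 2"
  unfolding gentle_def by (drule conjunct2, drule conjunct2, drule conjunct2, drule conjunct2, erule conjunct1)
lemma gD8: "gentle Q \<Longrightarrow> \<exists>n\<ge>1. \<forall>ws. is_path Q ws \<and> length ws = n \<longrightarrow>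
        (\<exists>i. Suc i < n \<and> (ws ! i, ws ! Suc i) \<in> rels Q)"
  unfolding gentle_def by (drule conjunct2, drule conjunct2, drule conjunct2, drule conjunct2,
     drule conjunct2, drule conjunct2, drule conjunct2, assumption)

lemma gentle_sq: assumes "gentle Q" "sign_fns Q \<sigma> \<tau>" shows "sq Q \<sigma> \<tau>"
proof -
  have "(a,b) \<in> rels Q \<Longrightarrow> a \<in> arrs Q \<and> b \<in> arrs Q \<and> src Q a = tgt Q b" for a b
  proof -
    assume "(a,b) \<in> rels Q"
    then have "is_path Q [a,b]" using gD4[OF assms(1)] by blast
    then show ?thesis unfolding is_path_def by auto
  qed
  then show ?thesis unfolding sq_def using assms(2) gD2[OF assms(1)] by blast
qed

lemma gentle_finite_arrs: assumes "gentle Q" shows "finite (arrs Q)"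
proof -
  have "arrs Q \<subseteq> (\<Union>x\<in>verts Q. {a\<in>arrs Q. src Q a = x})" using gD2[OF assms] by blast
  moreover have "finite (\<Union>x\<in>verts Q. {a\<in>arrs Q. src Q a = x})"
    using gD1[OF assms] gD5[OF assms] by blast
  ultimately show ?thesis by (rule finite_subset)
qed

lemma gentle_bound: assumes "gentle Q"
  shows "\<exists>n. \<forall>ws. is_path Q ws \<and> n \<le> length ws \<longrightarrow> (\<exists>i. Suc i < length ws \<and> (ws!i, ws!Suc i) \<in> rels Q)"
proof -
  obtain n where n: "n \<ge> 1" "\<forall>ws. is_path Q ws \<and> length ws = n \<longrightarrow>
        (\<exists>i. Suc i < n \<and> (ws ! i, ws ! Suc i) \<in> rels Q)" using gD8[OF assms] by blast
  have "(\<exists>i. Suc i < length ws \<and> (ws!i, ws!Suc i) \<in> rels Q)" if "is_path Q ws" "n \<le> length ws" for ws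
  proof -
    have "is_path Q (take n ws)" using that n(1) unfolding is_path_def
      by (auto dest: in_set_takeD)
    moreover have "length (take n ws) = n" using that by simp
    ultimately obtain i where "Suc i < n" "(take n ws ! i, take n ws ! Suc i) \<in> rels Q" using n by blast
    then show ?thesis using that by (intro exI[of _ i]) auto
  qed
  then show ?thesis by blast
qed

context
  fixes Q :: "('v,'a) quiv" and \<sigma> \<tau> :: "'a \<Rightarrow> int"
  assumes sq: "sq Q \<sigma> \<tau>"
begin

lemma N_ports: "p \<in> Nset Q \<sigma> \<tau> \<Longrightarrow> gsrc Q p \<in> verts Q \<and> gtgt Q p \<in> verts Q \<and> gsig \<sigma> p \<in> {1,-1} \<and> gtau \<tau> p \<in> {1,-1}"
proof (cases p)
  case (Path ws)
  assume "p \<in> Nset Q \<sigma> \<tau>"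
  then have "hd ws \<in> arrs Q" "last ws \<in> arrs Q" using Path N_Path[OF sq] by auto
  then show ?thesis using Path verts_arr[OF sq] sig_pm[OF sq] tau_pm[OF sq] by auto
qed (auto simp: Nset_iff antipath_def)

lemma M_ports: "p \<in> Mset Q \<sigma> \<tau> \<Longrightarrow> gsrc Q p \<in> verts Q \<and> gtgt Q p \<in> verts Q \<and> gsig \<sigma> p \<in> {1,-1} \<and> gtau \<tau> p \<in> {1,-1}"
proof (cases p)
  case (Path ws)
  assume "p \<in> Mset Q \<sigma> \<tau>"
  then have "hd ws \<in> arrs Q" "last ws \<in> arrs Q" using Path M_Path[OF sq] by auto
  then show ?thesis using Path verts_arr[OF sq] sig_pm[OF sq] tau_pm[OF sq] by auto
qed (auto simp: Mset_iff permitted_def)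

lemma finite_N: assumes "finite (verts Q)" shows "finite (Nset Q \<sigma> \<tau>)"
proof -
  have "inj_on (\<lambda>p. (gsrc Q p, gsig \<sigma> p)) (Nset Q \<sigma> \<tau>)"
    using N_unique_S[OF sq] by (auto simp: inj_on_def)
  moreover have "(\<lambda>p. (gsrc Q p, gsig \<sigma> p)) ` Nset Q \<sigma> \<tau> \<subseteq> verts Q \<times> {1,-1}"
    using N_ports by auto
  ultimately show ?thesis using assms
    by (meson finite.emptyI finite.insertI finite_SigmaI finite_imageD finite_subset)
qed

lemma succ_set: "successively P r \<Longrightarrow> r \<noteq> [] \<Longrightarrow> hd r \<in> A \<Longrightarrow> (\<And>u v. P u v \<Longrightarrow> v \<in> A) \<Longrightarrow> set r \<subseteq> A"
proof (induction r)
  case Nil then show ?case by simp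
next
  case (Cons x xs)
  show ?case
  proof (cases xs)
    case Nil then show ?thesis using Cons by simp
  next
    case (Cons y ys)
    then have "P x y" "successively P xs" using Cons.prems by auto
    then have "y \<in> A" using Cons.prems by blast
    then show ?thesis using Cons.IH[OF \<open>successively P xs\<close>] Cons.prems \<open>xs = y # ys\<close> by auto
  qed
qed

lemma R_chain_arrs: "successively (\<lambda>u v. (u,v) \<in> rels Q) r \<Longrightarrow> r \<noteq> [] \<Longrightarrow> hd r \<in> arrs Q \<Longrightarrow> set r \<subseteq> arrs Q"
  by (erule succ_set) (auto simp: rel_iff[OF sq])

lemma R_chain_arrs': "successively (\<lambda>u v. (v,u) \<in> rels Q) r \<Longrightarrow> r \<noteq> [] \<Longrightarrow> hd r \<in> arrs Q \<Longrightarrow> set r \<subseteq> arrs Q"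
  by (erule succ_set) (auto simp: rel_iff[OF sq])

lemma P_chain_arrs': "successively (\<lambda>u v. Pstep Q v u) r \<Longrightarrow> r \<noteq> [] \<Longrightarrow> hd r \<in> arrs Q \<Longrightarrow> set r \<subseteq> arrs Q"
  by (erule succ_set) (auto simp: Pstep_def)

lemma phi_ex:
  assumes "q \<in> Mset Q \<sigma> \<tau>" and fin: "finite (arrs Q)"
  shows "\<exists>p\<in>Nset Q \<sigma> \<tau>. gtgt Q p = gtgt Q q \<and> gtau \<tau> p = - gtau \<tau> q"
proof -
  define y f where "y = gtgt Q q" "f = gtau \<tau> q"
  have MT: "\<not> (\<exists>a\<in>arrs Q. src Q a = y \<and> \<sigma> a = - f)" using assms(1) by (simp add: Mset_iff y_f_def)
  have yf: "y \<in> verts Q" "f \<in> {1,-1}" using M_ports[OF assms(1)] y_f_def by auto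
  show ?thesis
  proof (cases "\<exists>a\<in>arrs Q. tgt Q a = y \<and> \<tau> a = - f")
    case True
    then obtain a where a: "a \<in> arrs Q" "tgt Q a = y" "\<tau> a = - f" by blast
    have "\<exists>r. successively (\<lambda>u v. (u,v) \<in> rels Q) r \<and> r \<noteq> [] \<and> hd r = a \<and> \<not> (\<exists>z. (last r, z) \<in> rels Q)"
    proof (rule chain_exists[where n="Suc (card (arrs Q))"])
      fix r assume r: "successively (\<lambda>u v. (u,v) \<in> rels Q) r" "r \<noteq> []" "hd r = a"
      have "distinct r"
      proof (rule chain_distinct[OF r(1,2)])
        show "\<And>x y z. (x, z) \<in> rels Q \<Longrightarrow> (y, z) \<in> rels Q \<Longrightarrow> x = y" using R_inj[OF sq] by blast
        show "\<not> (\<exists>c. (c, hd r) \<in> rels Q)" using MT a r(3) rel_iff[OF sq] by auto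
      qed
      moreover have "set r \<subseteq> arrs Q" using R_chain_arrs r a by auto
      ultimately have "length r \<le> card (arrs Q)" using fin by (metis card_mono distinct_card)
      then show "length r < Suc (card (arrs Q))" by simp
    qed
    then obtain r where r: "successively (\<lambda>u v. (u,v) \<in> rels Q) r" "r \<noteq> []" "hd r = a"
        "\<not> (\<exists>z. (last r, z) \<in> rels Q)" by blast
    have "set r \<subseteq> arrs Q" using R_chain_arrs r a by auto
    moreover have "\<not> (\<exists>c. (c, hd r) \<in> rels Q)" using MT a r(3) rel_iff[OF sq] by auto
    ultimately have "Path r \<in> Nset Q \<sigma> \<tau>" using r N_Path[OF sq] by auto
    then show ?thesis using r a y_f_def by (intro bexI[of _ "Path r"]) auto
  next
    case False
    have "ATriv y (-f) \<in> Nset Q \<sigma> \<tau>" using False MT yf by (auto simp: Nset_iff antipath_def)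
    then show ?thesis using y_f_def by (intro bexI[of _ "ATriv y (-f)"]) auto
  qed
qed

lemma psi_ex:
  assumes "p \<in> Nset Q \<sigma> \<tau>" and bd: "\<forall>ws. is_path Q ws \<and> n \<le> length ws \<longrightarrow> (\<exists>i. Suc i < length ws \<and> (ws!i, ws!Suc i) \<in> rels Q)"
  shows "\<exists>q\<in>Mset Q \<sigma> \<tau>. gsrc Q q = gsrc Q p \<and> gsig \<sigma> q = - gsig \<sigma> p"
proof -
  define x e where "x = gsrc Q p" "e = gsig \<sigma> p"
  have NS: "\<not> (\<exists>b\<in>arrs Q. tgt Q b = x \<and> \<tau> b = e)" using assms(1) by (simp add: Nset_iff x_e_def)
  have xe: "x \<in> verts Q" "e \<in> {1,-1}" using N_ports[OF assms(1)] x_e_def by auto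
  show ?thesis
  proof (cases "\<exists>a\<in>arrs Q. src Q a = x \<and> \<sigma> a = - e")
    case True
    then obtain a where a: "a \<in> arrs Q" "src Q a = x" "\<sigma> a = - e" by blast
    have "\<exists>r. successively (\<lambda>u v. Pstep Q v u) r \<and> r \<noteq> [] \<and> hd r = a \<and> \<not> (\<exists>z. Pstep Q z (last r))"
    proof (rule chain_exists[where n=n])
      fix r assume r: "successively (\<lambda>u v. Pstep Q v u) r" "r \<noteq> []" "hd r = a"
      show "length r < n"
      proof (rule ccontr)
        assume "\<not> length r < n"
        have "set r \<subseteq> arrs Q" using P_chain_arrs' r a by auto
        moreover have sp: "successively (Pstep Q) (rev r)" using r by simp
        moreover have "successively (\<lambda>a b. src Q a = tgt Q b) (rev r)"
          by (rule successively_mono[OF sp]) (simp add: Pstep_def)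
        ultimately have "is_path Q (rev r)" using r(2) unfolding is_path_succ by auto
        then obtain i where i: "Suc i < length (rev r)" "(rev r!i, rev r!Suc i) \<in> rels Q"
          using bd \<open>\<not> length r < n\<close> by fastforce
        then show False using successively_nth[OF sp i(1)] by (simp add: Pstep_def)
      qed
    qed
    then obtain r where r: "successively (\<lambda>u v. Pstep Q v u) r" "r \<noteq> []" "hd r = a"
        "\<not> (\<exists>z. Pstep Q z (last r))" by blast
    have "set r \<subseteq> arrs Q" using P_chain_arrs' r a by auto
    moreover have "\<not> (\<exists>b. Pstep Q a b)"
    proof
      assume "\<exists>b. Pstep Q a b"
      then obtain b where b: "b \<in> arrs Q" "src Q a = tgt Q b" "(a,b) \<notin> rels Q" unfolding Pstep_def by blast
      then have "\<sigma> a = - \<tau> b" using nrel_iff[OF sq] a by blast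
      then have "\<tau> b = e" using a by simp
      then show False using NS b a by auto
    qed
    ultimately have "Path (rev r) \<in> Mset Q \<sigma> \<tau>" using r M_Path[OF sq] by (auto simp: hd_rev last_rev)
    then show ?thesis using r a x_e_def by (intro bexI[of _ "Path (rev r)"]) (auto simp: last_rev)
  next
    case False
    have "PTriv x (-e) \<in> Mset Q \<sigma> \<tau>" using False NS xe by (auto simp: Mset_iff permitted_def)
    then show ?thesis using x_e_def by (intro bexI[of _ "PTriv x (-e)"]) auto
  qed
qed

lemma Cset_iff: "a \<in> Cset Q \<sigma> \<tau> \<longleftrightarrow> a \<in> arrs Q \<and> (\<forall>ws. Path ws \<in> Nset Q \<sigma> \<tau> \<longrightarrow> a \<notin> set ws)"
  unfolding Cset_def by (auto simp: in_set_conv_decomp)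

lemma C_succ:
  assumes "a \<in> Cset Q \<sigma> \<tau>" and fin: "finite (arrs Q)"
  shows "\<exists>b. b \<in> Cset Q \<sigma> \<tau> \<and> tgt Q b = src Q a \<and> \<tau> b = \<sigma> a"
proof -
  have a: "a \<in> arrs Q" "\<And>ws. Path ws \<in> Nset Q \<sigma> \<tau> \<Longrightarrow> a \<notin> set ws" using assms Cset_iff by auto
  have "\<exists>b. (a,b) \<in> rels Q"
  proof (rule ccontr)
    assume nb: "\<not> (\<exists>b. (a,b) \<in> rels Q)"
    have "\<exists>r. successively (\<lambda>u v. (v,u) \<in> rels Q) r \<and> r \<noteq> [] \<and> hd r = a \<and> \<not> (\<exists>z. (z, last r) \<in> rels Q)"
    proof (rule chain_exists[where n="Suc (card (arrs Q))"])
      fix r assume r: "successively (\<lambda>u v. (v,u) \<in> rels Q) r" "r \<noteq> []" "hd r = a"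
      have "distinct r"
      proof (rule chain_distinct[OF r(1,2)])
        show "\<And>x y z. (z, x) \<in> rels Q \<Longrightarrow> (z, y) \<in> rels Q \<Longrightarrow> x = y" using R_fun[OF sq] by blast
        show "\<not> (\<exists>c. (hd r, c) \<in> rels Q)" using nb r(3) by auto
      qed
      moreover have "set r \<subseteq> arrs Q" using R_chain_arrs' r a by auto
      ultimately have "length r \<le> card (arrs Q)" using fin by (metis card_mono distinct_card)
      then show "length r < Suc (card (arrs Q))" by simp
    qed
    then obtain r where r: "successively (\<lambda>u v. (v,u) \<in> rels Q) r" "r \<noteq> []" "hd r = a"
        "\<not> (\<exists>z. (z, last r) \<in> rels Q)" by blast
    have "set r \<subseteq> arrs Q" using R_chain_arrs' r a by auto
    then have "Path (rev r) \<in> Nset Q \<sigma> \<tau>" using r nb N_Path[OF sq] by (auto simp: hd_rev last_rev)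
    moreover have "a \<in> set (rev r)" using r by auto
    ultimately show False using a by blast
  qed
  then obtain b where b: "(a,b) \<in> rels Q" by blast
  have "b \<in> Cset Q \<sigma> \<tau>"
  proof -
    have "b \<notin> set ws" if ws: "Path ws \<in> Nset Q \<sigma> \<tau>" for ws
    proof
      assume "b \<in> set ws"
      then obtain us vs where d: "ws = us @ b # vs" by (auto simp: in_set_conv_decomp)
      have W: "successively (\<lambda>a b. (a,b) \<in> rels Q) ws" "\<not> (\<exists>a. (a, hd ws) \<in> rels Q)"
        using ws N_Path[OF sq] by auto
      show False
      proof (cases "us = []")
        case True then show False using W(2) d b by simp
      next
        case False
        then have "(last us, b) \<in> rels Q" using W(1) d by (simp add: successively_append_iff)
        then have "last us = a" using b R_inj[OF sq] by blast
        then have "a \<in> set ws" using d False last_in_set by fastforce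
        then show False using a ws by blast
      qed
    qed
    then show ?thesis using b rel_iff[OF sq] Cset_iff by auto
  qed
  then show ?thesis using b rel_iff[OF sq] by auto
qed

end


definition reach :: "('x \<Rightarrow> 'x) \<Rightarrow> 'x \<Rightarrow> 'x \<Rightarrow> bool" where
  "reach f x y \<longleftrightarrow> (\<exists>n. (f ^^ n) x = y)"

lemma orbit_on_reach: "orbit_on A f x = {y \<in> A. reach f x y \<or> reach f y x}"
  unfolding orbit_on_def reach_def by auto

lemma reach_refl[simp]: "reach f x x"
  unfolding reach_def by (intro exI[of _ 0]) simp

lemma reach_step: "reach f x y \<Longrightarrow> reach f x (f y)"
  unfolding reach_def by (metis funpow.simps(2) o_apply)

lemma reach_trans: "reach f x y \<Longrightarrow> reach f y z \<Longrightarrow> reach f x z"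
  unfolding reach_def by (metis funpow_add o_apply)

locale permA =
  fixes A :: "'x set" and f :: "'x \<Rightarrow> 'x"
  assumes fin: "finite A" and maps: "\<And>x. x \<in> A \<Longrightarrow> f x \<in> A" and inj: "inj_on f A"
begin

lemma iter_in: "x \<in> A \<Longrightarrow> (f ^^ n) x \<in> A"
  by (induction n) (auto intro: maps)

lemma inj_iter: "inj_on (f ^^ n) A"
proof (induction n)
  case 0 then show ?case by simp
next
  case (Suc n)
  show ?case unfolding inj_on_def
  proof (intro ballI impI)
    fix x y assume xy: "x \<in> A" "y \<in> A" "(f ^^ Suc n) x = (f ^^ Suc n) y"
    then have "f ((f ^^ n) x) = f ((f ^^ n) y)" by simp
    then have "(f ^^ n) x = (f ^^ n) y" using inj iter_in xy by (meson inj_onD)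
    then show "x = y" using Suc xy by (meson inj_onD)
  qed
qed

lemma period: assumes "x \<in> A" shows "\<exists>d>0. (f ^^ d) x = x"
proof -
  have "\<not> inj_on (\<lambda>n. (f ^^ n) x) {0..card A}"
  proof
    assume i: "inj_on (\<lambda>n. (f ^^ n) x) {0..card A}"
    have "(\<lambda>n. (f ^^ n) x) ` {0..card A} \<subseteq> A" using iter_in assms by auto
    then have "card ((\<lambda>n. (f ^^ n) x) ` {0..card A}) \<le> card A" using fin by (simp add: card_mono)
    then show False using card_image[OF i] by simp
  qed
  then obtain i j where ij: "i \<le> card A" "j \<le> card A" "i \<noteq> j" "(f ^^ i) x = (f ^^ j) x"
    unfolding inj_on_def by auto
  then have "\<exists>i j. i < j \<and> (f ^^ i) x = (f ^^ j) x" by (metis linorder_neqE_nat)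
  then obtain i j where ij: "i < j" "(f ^^ i) x = (f ^^ j) x" by blast
  then have "(f ^^ i) x = (f ^^ i) ((f ^^ (j - i)) x)"
    by (metis add_diff_inverse_nat funpow_add less_imp_not_less o_apply)
  then have "x = (f ^^ (j - i)) x" using inj_iter[of i] assms iter_in by (meson inj_onD)
  then show ?thesis using ij by (intro exI[of _ "j - i"]) auto
qed

lemma reach_sym: assumes "y \<in> A" "reach f y x" shows "reach f x y"
proof -
  obtain n where n: "(f ^^ n) y = x" using assms unfolding reach_def by blast
  obtain d where d: "d > 0" "(f ^^ d) y = y" using period assms(1) by blast
  have dk: "(f ^^ (d * k)) y = y" for k
  proof (induction k)
    case 0 then show ?case by simp
  next
    case (Suc k)
    have "(f ^^ (d * Suc k)) y = (f ^^ d) ((f ^^ (d * k)) y)"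
      by (metis funpow_add mult_Suc_right o_apply)
    then show ?case using Suc d by simp
  qed
  have "d * n \<ge> n" using d by simp
  then have "(f ^^ (d * n - n)) x = (f ^^ (d * n)) y"
    using n by (metis funpow_add le_add_diff_inverse2 o_apply)
  then show ?thesis using dk unfolding reach_def by metis
qed

lemma orbit_fwd: assumes "x \<in> A" shows "orbit_on A f x = {y \<in> A. reach f x y}"
proof -
  have "reach f x y" if "y \<in> A" "reach f y x" for y using reach_sym that by blast
  then show ?thesis unfolding orbit_on_reach by blast
qed

lemma orbit_eq: assumes "x \<in> A" "y \<in> orbit_on A f x" shows "orbit_on A f y = orbit_on A f x"
proof -
  have y: "y \<in> A" "reach f x y" using assms orbit_fwd by auto
  have yx: "reach f y x" using reach_sym[OF assms(1)] y by blast
  have "reach f y z \<longleftrightarrow> reach f x z" for z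
    using reach_trans[OF y(2), of z] reach_trans[OF yx, of z] by blast
  then show ?thesis using orbit_fwd[OF assms(1)] orbit_fwd[OF y(1)] by blast
qed

lemma self_in_orbit: "x \<in> A \<Longrightarrow> x \<in> orbit_on A f x"
  unfolding orbit_on_reach by simp

lemma orbit_single: assumes "x \<in> A" shows "orbit_on A f x = {x} \<longleftrightarrow> f x = x"
proof
  assume "orbit_on A f x = {x}"
  moreover have "f x \<in> orbit_on A f x" using assms maps orbit_fwd reach_step[OF reach_refl] by auto
  ultimately show "f x = x" by auto
next
  assume fx: "f x = x"
  have "(f ^^ n) x = x" for n by (induction n) (auto simp: fx)
  then show "orbit_on A f x = {x}" using orbit_fwd[OF assms] assms unfolding reach_def by auto
qed

end

locale permA_del = permA +
  fixes r :: 'x and g :: "'x \<Rightarrow> 'x"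
  assumes r: "r \<in> A" and fr: "f r \<noteq> r"
    and g: "\<And>x. x \<in> A - {r} \<Longrightarrow> g x = (if f x = r then f r else f x)"
begin

lemma g_maps: assumes "x \<in> A - {r}" shows "g x \<in> A - {r}"
proof (cases "f x = r")
  case True
  then have "g x = f r" using g[OF assms] by simp
  then show ?thesis using maps[OF r] fr by simp
next
  case False
  then have "g x = f x" using g[OF assms] by simp
  then show ?thesis using maps assms False by simp
qed

lemma g_reach_f: assumes "x \<in> A - {r}" shows "reach f x (g x)"
proof (cases "f x = r")
  case True
  have "reach f x (f x)" by (rule reach_step[OF reach_refl])
  then have "reach f x (f (f x))" by (rule reach_step)
  then show ?thesis using g[OF assms] True by simp
next
  case False
  have "reach f x (f x)" by (rule reach_step[OF reach_refl])
  then show ?thesis using g[OF assms] False by simp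
qed

lemma greach_imp: assumes "x \<in> A - {r}" shows "(g ^^ n) x \<in> A - {r} \<and> reach f x ((g ^^ n) x)"
proof (induction n)
  case 0 then show ?case using assms by simp
next
  case (Suc n)
  then have a: "(g ^^ n) x \<in> A - {r}" "reach f x ((g ^^ n) x)" by auto
  have "g ((g ^^ n) x) \<in> A - {r}" by (rule g_maps[OF a(1)])
  moreover have "reach f x (g ((g ^^ n) x))" by (rule reach_trans[OF a(2) g_reach_f[OF a(1)]])
  ultimately show ?case by simp
qed

lemma freach_imp: assumes "x \<in> A - {r}"
  shows "\<And>y. y \<in> A - {r} \<Longrightarrow> (f ^^ n) x = y \<Longrightarrow> reach g x y"
proof (induction n rule: less_induct)
  case (less n)
  note IH = less(1)
  show ?case
  proof (cases n)
    case 0 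
    then have "y = x" using less(3) by simp
    then show ?thesis by simp
  next
    case (Suc m)
    define z where "z = (f ^^ m) x"
    have zA: "z \<in> A" using iter_in assms z_def by auto
    have fz: "f z = y" using less(3) Suc z_def by simp
    show ?thesis
    proof (cases "z = r")
      case False
      have "m < n" using Suc by simp
      then have "reach g x z" using IH[of m z] zA False z_def by blast
      then have "reach g x (g z)" by (rule reach_step)
      moreover have "g z = y" using g[of z] False zA fz less(2) by auto
      ultimately show ?thesis by simp
    next
      case True
      have "m \<noteq> 0"
      proof
        assume "m = 0"
        then have "z = x" using z_def by simp
        then show False using True assms by simp
      qed
      then obtain k where k: "m = Suc k" by (cases m) auto
      define w where "w = (f ^^ k) x"
      have wA: "w \<in> A" using iter_in assms w_def by auto
      have fw: "f w = r" using True z_def w_def k by simp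
      have "w \<noteq> r" using fw fr by auto
      have "k < n" using Suc k by simp
      then have "reach g x w" using IH[of k w] wA \<open>w \<noteq> r\<close> w_def by blast
      then have "reach g x (g w)" by (rule reach_step)
      moreover have "g w = y" using g[of w] \<open>w \<noteq> r\<close> wA fw fz True by auto
      ultimately show ?thesis by simp
    qed
  qed
qed

lemma reach_g_iff: assumes "x \<in> A - {r}" "y \<in> A - {r}" shows "reach g x y \<longleftrightarrow> reach f x y"
proof
  assume "reach g x y"
  then obtain n where "(g ^^ n) x = y" unfolding reach_def by blast
  then show "reach f x y" using greach_imp[OF assms(1), of n] by simp
next
  assume "reach f x y"
  then obtain n where "(f ^^ n) x = y" unfolding reach_def by blast
  then show "reach g x y" using freach_imp[OF assms(1) assms(2)] by simp
qed

lemma orbit_g: assumes "x \<in> A - {r}" shows "orbit_on (A - {r}) g x = orbit_on A f x - {r}"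
proof -
  have "y \<in> orbit_on (A - {r}) g x \<longleftrightarrow> y \<in> orbit_on A f x - {r}" for y
  proof (cases "y \<in> A - {r}")
    case True
    then show ?thesis unfolding orbit_on_reach using reach_g_iff[OF assms True] reach_g_iff[OF True assms] by simp
  next
    case False
    then show ?thesis unfolding orbit_on_reach by auto
  qed
  then show ?thesis by blast
qed

lemma orbits_g:
  "(\<lambda>x. orbit_on (A - {r}) g x) ` (A - {r}) =
     {O' \<in> (\<lambda>x. orbit_on A f x) ` A. O' \<noteq> orbit_on A f r} \<union> {orbit_on A f r - {r}}"
proof (intro equalityI subsetI)
  fix O' assume "O' \<in> (\<lambda>x. orbit_on (A - {r}) g x) ` (A - {r})"
  then obtain x where x: "x \<in> A - {r}" "O' = orbit_on A f x - {r}" using orbit_g by auto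
  show "O' \<in> {O' \<in> (\<lambda>x. orbit_on A f x) ` A. O' \<noteq> orbit_on A f r} \<union> {orbit_on A f r - {r}}"
  proof (cases "r \<in> orbit_on A f x")
    case True
    then have "orbit_on A f r = orbit_on A f x" using orbit_eq x(1) by simp
    then show ?thesis using x(2) by simp
  next
    case False
    then have "O' = orbit_on A f x" using x by auto
    moreover have "orbit_on A f x \<noteq> orbit_on A f r" using False self_in_orbit[OF r] by auto
    ultimately show ?thesis using x by auto
  qed
next
  fix O' assume O': "O' \<in> {O' \<in> (\<lambda>x. orbit_on A f x) ` A. O' \<noteq> orbit_on A f r} \<union> {orbit_on A f r - {r}}"
  show "O' \<in> (\<lambda>x. orbit_on (A - {r}) g x) ` (A - {r})"
  proof (cases "O' = orbit_on A f r - {r}")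
    case True
    have frA: "f r \<in> A - {r}" using maps r fr by auto
    have "f r \<in> orbit_on A f r" using orbit_fwd[OF r] maps[OF r] reach_step[OF reach_refl] by auto
    then have "orbit_on A f (f r) = orbit_on A f r" using orbit_eq r by blast
    then have "O' = orbit_on (A - {r}) g (f r)" using True orbit_g[OF frA] by simp
    then show ?thesis using frA by blast
  next
    case False
    then obtain x where x: "x \<in> A" "O' = orbit_on A f x" "O' \<noteq> orbit_on A f r" using O' by auto
    have "r \<notin> O'"
    proof
      assume "r \<in> O'"
      then have "orbit_on A f r = orbit_on A f x" using orbit_eq[OF x(1)] x(2) by simp
      then show False using x(2,3) by simp
    qed
    moreover then have "x \<noteq> r" using x self_in_orbit by auto
    ultimately have "O' = orbit_on (A - {r}) g x" using orbit_g x by auto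
    then show ?thesis using x \<open>x \<noteq> r\<close> by blast
  qed
qed

end


context
  fixes Q :: "('v,'a) quiv" and \<sigma> \<tau> :: "'a \<Rightarrow> int"
  assumes sq: "sq Q \<sigma> \<tau>"
begin

lemma psi_eq: assumes "p \<in> Nset Q \<sigma> \<tau>" "q \<in> Mset Q \<sigma> \<tau>" "gsrc Q q = gsrc Q p" "gsig \<sigma> q = - gsig \<sigma> p"
  shows "psi Q \<sigma> \<tau> p = q"
  unfolding psi_def
proof (rule the_equality)
  show "q \<in> Mset Q \<sigma> \<tau> \<and> gsrc Q q = gsrc Q p \<and> gsig \<sigma> q = - gsig \<sigma> p" using assms by simp
  fix q' assume "q' \<in> Mset Q \<sigma> \<tau> \<and> gsrc Q q' = gsrc Q p \<and> gsig \<sigma> q' = - gsig \<sigma> p"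
  then show "q' = q" using M_unique_S[OF sq, of q' q] assms by simp
qed

lemma phi_eq: assumes "q \<in> Mset Q \<sigma> \<tau>" "p \<in> Nset Q \<sigma> \<tau>" "gtgt Q p = gtgt Q q" "gtau \<tau> p = - gtau \<tau> q"
  shows "phi Q \<sigma> \<tau> q = p"
  unfolding phi_def
proof (rule the_equality)
  show "p \<in> Nset Q \<sigma> \<tau> \<and> gtgt Q p = gtgt Q q \<and> gtau \<tau> p = - gtau \<tau> q" using assms by simp
  fix p' assume "p' \<in> Nset Q \<sigma> \<tau> \<and> gtgt Q p' = gtgt Q q \<and> gtau \<tau> p' = - gtau \<tau> q"
  then show "p' = p" using N_unique_T[OF sq, of p' p] assms by simp
qed

lemma Psi_eq: assumes "b \<in> Cset Q \<sigma> \<tau>" "tgt Q b = src Q a" "\<tau> b = \<sigma> a"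
  shows "Psi Q \<sigma> \<tau> a = b"
  unfolding Psi_def
proof (rule the_equality)
  show "b \<in> Cset Q \<sigma> \<tau> \<and> tgt Q b = src Q a \<and> \<tau> b = \<sigma> a" using assms by simp
  fix b' assume "b' \<in> Cset Q \<sigma> \<tau> \<and> tgt Q b' = src Q a \<and> \<tau> b' = \<sigma> a"
  then show "b' = b" using in_unique[OF sq, of b' b] assms Cset_iff[OF sq] by auto
qed

end

context
  fixes Q :: "('v,'a) quiv" and \<sigma> \<tau> :: "'a \<Rightarrow> int"
  assumes gQ: "gentle Q" and sQ: "sign_fns Q \<sigma> \<tau>"
begin

lemma sqQ: "sq Q \<sigma> \<tau>" using gentle_sq[OF gQ sQ] .

lemma psi_in: assumes "p \<in> Nset Q \<sigma> \<tau>"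
  shows "psi Q \<sigma> \<tau> p \<in> Mset Q \<sigma> \<tau> \<and> gsrc Q (psi Q \<sigma> \<tau> p) = gsrc Q p \<and> gsig \<sigma> (psi Q \<sigma> \<tau> p) = - gsig \<sigma> p"
proof -
  obtain n where n: "\<forall>ws. is_path Q ws \<and> n \<le> length ws \<longrightarrow> (\<exists>i. Suc i < length ws \<and> (ws!i, ws!Suc i) \<in> rels Q)"
    using gentle_bound[OF gQ] by blast
  obtain q where q: "q \<in> Mset Q \<sigma> \<tau>" "gsrc Q q = gsrc Q p" "gsig \<sigma> q = - gsig \<sigma> p"
    using psi_ex[OF sqQ assms n] by blast
  then show ?thesis using psi_eq[OF sqQ assms q] by simp
qed

lemma phi_in: assumes "q \<in> Mset Q \<sigma> \<tau>"
  shows "phi Q \<sigma> \<tau> q \<in> Nset Q \<sigma> \<tau> \<and> gtgt Q (phi Q \<sigma> \<tau> q) = gtgt Q q \<and> gtau \<tau> (phi Q \<sigma> \<tau> q) = - gtau \<tau> q"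
proof -
  obtain p where p: "p \<in> Nset Q \<sigma> \<tau>" "gtgt Q p = gtgt Q q" "gtau \<tau> p = - gtau \<tau> q"
    using phi_ex[OF sqQ assms gentle_finite_arrs[OF gQ]] by blast
  then show ?thesis using phi_eq[OF sqQ assms p] by simp
qed

lemma Phi_in: "p \<in> Nset Q \<sigma> \<tau> \<Longrightarrow> Phi Q \<sigma> \<tau> p \<in> Nset Q \<sigma> \<tau>"
  unfolding Phi_def using psi_in phi_in by simp

lemma Phi_inj: "inj_on (Phi Q \<sigma> \<tau>) (Nset Q \<sigma> \<tau>)"
proof (rule inj_onI)
  fix p p' assume pp: "p \<in> Nset Q \<sigma> \<tau>" "p' \<in> Nset Q \<sigma> \<tau>" "Phi Q \<sigma> \<tau> p = Phi Q \<sigma> \<tau> p'"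
  have m: "psi Q \<sigma> \<tau> p \<in> Mset Q \<sigma> \<tau>" "psi Q \<sigma> \<tau> p' \<in> Mset Q \<sigma> \<tau>" using psi_in pp by auto
  have "gtgt Q (psi Q \<sigma> \<tau> p) = gtgt Q (psi Q \<sigma> \<tau> p')" "gtau \<tau> (psi Q \<sigma> \<tau> p) = gtau \<tau> (psi Q \<sigma> \<tau> p')"
    using phi_in[OF m(1)] phi_in[OF m(2)] pp(3) unfolding Phi_def by (metis o_apply neg_equal_iff_equal)+
  then have "psi Q \<sigma> \<tau> p = psi Q \<sigma> \<tau> p'" using M_unique_T[OF sqQ m] by simp
  then show "p = p'" using N_unique_S[OF sqQ pp(1,2)] psi_in[OF pp(1)] psi_in[OF pp(2)] by simp
qed

lemma permN: "permA (Nset Q \<sigma> \<tau>) (Phi Q \<sigma> \<tau>)"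
  by unfold_locales (use finite_N[OF sqQ gD1[OF gQ]] Phi_in Phi_inj in auto)

lemma Psi_in: assumes "a \<in> Cset Q \<sigma> \<tau>"
  shows "Psi Q \<sigma> \<tau> a \<in> Cset Q \<sigma> \<tau> \<and> tgt Q (Psi Q \<sigma> \<tau> a) = src Q a \<and> \<tau> (Psi Q \<sigma> \<tau> a) = \<sigma> a"
proof -
  obtain b where b: "b \<in> Cset Q \<sigma> \<tau>" "tgt Q b = src Q a" "\<tau> b = \<sigma> a"
    using C_succ[OF sqQ assms gentle_finite_arrs[OF gQ]] by blast
  then show ?thesis using Psi_eq[OF sqQ b] by simp
qed

end


lemma succ_closed_last:
  "successively P ws \<Longrightarrow> x \<in> set ws \<Longrightarrow> x \<in> S \<Longrightarrow> (\<And>u v. P u v \<Longrightarrow> u \<in> S \<Longrightarrow> v \<in> S) \<Longrightarrow> last ws \<in> S"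
proof (induction ws arbitrary: x)
  case Nil then show ?case by simp
next
  case (Cons y ys)
  show ?case
  proof (cases ys)
    case Nil then show ?thesis using Cons.prems by simp
  next
    case (Cons z zs)
    have P: "P y z" "successively P ys" using Cons.prems(1) \<open>ys = z # zs\<close> by auto
    have "x \<in> set ys \<or> x = y" using Cons.prems(2) by auto
    then have "\<exists>x'\<in>set ys. x' \<in> S"
    proof
      assume "x = y" then have "z \<in> S" using Cons.prems(3,4) P(1) by blast
      then show ?thesis using \<open>ys = z # zs\<close> by auto
    next
      assume "x \<in> set ys" then show ?thesis using Cons.prems(3) by blast
    qed
    then obtain x' where "x' \<in> set ys" "x' \<in> S" by blast
    then have "last ys \<in> S" using Cons.IH[OF P(2)] Cons.prems(4) by metis
    then show ?thesis using \<open>ys = z # zs\<close> by simp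
  qed
qed

locale sit =
  fixes Q :: "('v,'a) quiv" and \<sigma> \<tau> :: "'a \<Rightarrow> int" and \<alpha> \<beta> \<gamma> :: 'a
  assumes gQ: "gentle Q" and sQ: "sign_fns Q \<sigma> \<tau>" and iso: "isolated Q \<sigma> \<tau> \<alpha> \<beta>" and gn: "\<gamma> \<notin> arrs Q"
begin

abbreviation "Q' \<equiv> complete Q \<alpha> \<beta> \<gamma>"
definition "sg' = \<sigma>(\<gamma> := \<tau> \<alpha>)"
definition "tu' = \<tau>(\<gamma> := \<sigma> \<beta>)"
abbreviation "\<sigma>' \<equiv> sg'"
abbreviation "\<tau>' \<equiv> tu'"
lemma sg'_apply: "sg' a = (if a = \<gamma> then \<tau> \<alpha> else \<sigma> a)" unfolding sg'_def by simp
lemma tu'_apply: "tu' a = (if a = \<gamma> then \<sigma> \<beta> else \<tau> a)" unfolding tu'_def by simp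
abbreviation "\<rho> \<equiv> Path [\<alpha>, \<beta>]"

lemma sq: "sq Q \<sigma> \<tau>" using sqQ[OF gQ sQ] .

lemma Q'_simps[simp]: "verts Q' = verts Q" "arrs Q' = insert \<gamma> (arrs Q)"
  "src Q' = (src Q)(\<gamma> := tgt Q \<alpha>)" "tgt Q' = (tgt Q)(\<gamma> := src Q \<beta>)"
  "rels Q' = rels Q \<union> {(\<gamma>, \<alpha>), (\<beta>, \<gamma>)}"
  unfolding complete_def by simp_all

lemmas sgtu = sg'_apply tu'_apply

lemma rhoN: "\<rho> \<in> Nset Q \<sigma> \<tau>" using iso unfolding isolated_def by blast
lemma abR: "(\<alpha>, \<beta>) \<in> rels Q" using iso unfolding isolated_def by blast
lemma ab: "\<alpha> \<in> arrs Q" "\<beta> \<in> arrs Q" "src Q \<alpha> = tgt Q \<beta>" "\<sigma> \<alpha> = \<tau> \<beta>"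
  using abR rel_iff[OF sq] by auto
lemma Tmax: "\<not> (\<exists>a\<in>arrs Q. src Q a = tgt Q \<alpha> \<and> \<sigma> a = \<tau> \<alpha>)" using rhoN by (simp add: Nset_iff)
lemma Smax: "\<not> (\<exists>b\<in>arrs Q. tgt Q b = src Q \<beta> \<and> \<tau> b = \<sigma> \<beta>)" using rhoN by (simp add: Nset_iff)
lemma neq: "\<alpha> \<noteq> \<beta>" "\<alpha> \<noteq> \<gamma>" "\<beta> \<noteq> \<gamma>"
  using Tmax ab gn by auto
lemma pm: "\<sigma> \<alpha> \<in> {1,-1}" "\<tau> \<alpha> \<in> {1,-1}" "\<sigma> \<beta> \<in> {1,-1}" "\<tau> \<beta> \<in> {1,-1}"
  using ab sig_pm[OF sq] tau_pm[OF sq] by auto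

lemma out_tgt_alpha: "a \<in> arrs Q \<Longrightarrow> src Q a = tgt Q \<alpha> \<Longrightarrow> \<sigma> a = - \<tau> \<alpha>"
  using Tmax sig_pm[OF sq, of a] pm by auto
lemma in_src_beta: "b \<in> arrs Q \<Longrightarrow> tgt Q b = src Q \<beta> \<Longrightarrow> \<tau> b = - \<sigma> \<beta>"
  using Smax tau_pm[OF sq, of b] pm by auto

lemma rel_new: "(\<gamma>, y) \<in> rels Q \<Longrightarrow> False" "(y, \<gamma>) \<in> rels Q \<Longrightarrow> False"
  using rel_iff[OF sq] gn by auto

lemma sf': "sign_fns Q' \<sigma>' \<tau>'"
proof -
  have s1: "\<forall>a\<in>arrs Q'. \<sigma>' a \<in> {1, -1} \<and> \<tau>' a \<in> {1, -1}"
    using pm sig_pm[OF sq] tau_pm[OF sq] gn by (auto simp: sgtu)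
  have s2: "\<forall>a\<in>arrs Q'. \<forall>b\<in>arrs Q'. a \<noteq> b \<and> src Q' a = src Q' b \<longrightarrow> \<sigma>' a = - \<sigma>' b"
  proof (intro ballI impI)
    fix a b assume a: "a \<in> arrs Q'" "b \<in> arrs Q'" "a \<noteq> b \<and> src Q' a = src Q' b"
    show "\<sigma>' a = - \<sigma>' b"
    proof (cases "a = \<gamma>")
      case True then have "b \<in> arrs Q" "b \<noteq> \<gamma>" using a by (auto simp: sgtu)
      then show ?thesis using True a out_tgt_alpha[of b] by (auto simp: sgtu)
    next
      case False note aF = False
      show ?thesis
      proof (cases "b = \<gamma>")
        case True then have "a \<in> arrs Q" using a aF by (auto simp: sgtu)
        then show ?thesis using True a aF out_tgt_alpha[of a] by (auto simp: sgtu)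
      next
        case False then show ?thesis using a aF sQ unfolding sign_fns_def by (auto simp: sgtu)
      qed
    qed
  qed
  have s3: "\<forall>a\<in>arrs Q'. \<forall>b\<in>arrs Q'. a \<noteq> b \<and> tgt Q' a = tgt Q' b \<longrightarrow> \<tau>' a = - \<tau>' b"
  proof (intro ballI impI)
    fix a b assume a: "a \<in> arrs Q'" "b \<in> arrs Q'" "a \<noteq> b \<and> tgt Q' a = tgt Q' b"
    show "\<tau>' a = - \<tau>' b"
    proof (cases "a = \<gamma>")
      case True then have "b \<in> arrs Q" "b \<noteq> \<gamma>" using a by (auto simp: sgtu)
      then show ?thesis using True a in_src_beta[of b] by (auto simp: sgtu)
    next
      case False note aF = False
      show ?thesis
      proof (cases "b = \<gamma>")
        case True then have "a \<in> arrs Q" using a aF by (auto simp: sgtu)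
        then show ?thesis using True a aF in_src_beta[of a] by (auto simp: sgtu)
      next
        case False then show ?thesis using a aF sQ unfolding sign_fns_def by (auto simp: sgtu)
      qed
    qed
  qed
  have s4: "\<forall>a\<in>arrs Q'. \<forall>b\<in>arrs Q'. src Q' a = tgt Q' b \<longrightarrow> ((a, b) \<in> rels Q' \<longleftrightarrow> \<sigma>' a = \<tau>' b)"
  proof (intro ballI impI)
    fix a b assume a: "a \<in> arrs Q'" "b \<in> arrs Q'" "src Q' a = tgt Q' b"
    show "(a, b) \<in> rels Q' \<longleftrightarrow> \<sigma>' a = \<tau>' b"
    proof (cases "a = \<gamma>")
      case True note aT = True
      show ?thesis
      proof (cases "b = \<gamma>")
        case True
        then have "src Q \<beta> = tgt Q \<alpha>" using a aT by simp
        then have "\<sigma> \<beta> \<noteq> \<tau> \<alpha>" using Tmax ab by (auto simp: sgtu)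
        then show ?thesis using aT True neq rel_new by (auto simp: sgtu)
      next
        case False
        then have b: "b \<in> arrs Q" "tgt Q b = tgt Q \<alpha>" using a aT by (auto simp: sgtu)
        have "\<tau> b = \<tau> \<alpha> \<longleftrightarrow> b = \<alpha>" using in_unique[OF sq b(1) ab(1) b(2)] by (auto simp: sgtu)
        then show ?thesis using aT False neq rel_new by (auto simp: sgtu)
      qed
    next
      case False note aF = False
      show ?thesis
      proof (cases "b = \<gamma>")
        case True
        then have b: "a \<in> arrs Q" "src Q a = src Q \<beta>" using a aF by (auto simp: sgtu)
        have "\<sigma> a = \<sigma> \<beta> \<longleftrightarrow> a = \<beta>" using out_unique[OF sq b(1) ab(2) b(2)] by (auto simp: sgtu)
        then show ?thesis using aF True neq rel_new by (auto simp: sgtu)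
      next
        case False
        then have "a \<in> arrs Q" "b \<in> arrs Q" "src Q a = tgt Q b" using a aF by (auto simp: sgtu)
        then show ?thesis using aF False sQ neq unfolding sign_fns_def by (auto simp: sgtu)
      qed
    qed
  qed
  show ?thesis unfolding sign_fns_def using s1 s2 s3 s4 by blast
qed

lemma sq': "sq Q' \<sigma>' \<tau>'"
proof -
  have "(a,b) \<in> rels Q' \<Longrightarrow> a \<in> arrs Q' \<and> b \<in> arrs Q' \<and> src Q' a = tgt Q' b" for a b
    using rel_iff[OF sq, of a b] ab neq gn by (auto simp: sgtu)
  moreover have "\<forall>a\<in>arrs Q'. src Q' a \<in> verts Q' \<and> tgt Q' a \<in> verts Q'"
    using verts_arr[OF sq] ab by (auto simp: sgtu)
  ultimately show ?thesis unfolding sq_def using sf' by blast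
qed

end


context sit
begin

lemma rho_not_N': "\<rho> \<notin> Nset Q' \<sigma>' \<tau>'"
  using N_Path[OF sq', of "[\<alpha>,\<beta>]"] by auto

lemma closure3: "(u,v) \<in> rels Q' \<Longrightarrow> u \<in> {\<alpha>,\<beta>,\<gamma>} \<Longrightarrow> v \<in> {\<alpha>,\<beta>,\<gamma>}"
proof -
  assume uv: "(u,v) \<in> rels Q'" "u \<in> {\<alpha>,\<beta>,\<gamma>}"
  show "v \<in> {\<alpha>,\<beta>,\<gamma>}"
  proof (cases "(u,v) \<in> rels Q")
    case True
    then have "u \<noteq> \<gamma>" using rel_new by blast
    moreover have "u \<noteq> \<beta>"
    proof
      assume "u = \<beta>"
      then have "v \<in> arrs Q" "tgt Q v = src Q \<beta>" "\<tau> v = \<sigma> \<beta>" using True rel_iff[OF sq] by auto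
      then show False using Smax by blast
    qed
    ultimately have "u = \<alpha>" using uv by auto
    then have "v = \<beta>" using R_fun[OF sq] True abR by blast
    then show ?thesis by simp
  next
    case False
    then have "(u,v) = (\<gamma>,\<alpha>) \<or> (u,v) = (\<beta>,\<gamma>)" using uv(1) by simp
    then show ?thesis by auto
  qed
qed

lemma gfree_N': assumes "Path ws \<in> Nset Q' \<sigma>' \<tau>'" shows "\<gamma> \<notin> set ws"
proof
  assume g: "\<gamma> \<in> set ws"
  have W: "successively (\<lambda>a b. (a,b) \<in> rels Q') ws" "\<not> (\<exists>b. (last ws, b) \<in> rels Q')"
    using N_Path[OF sq'] assms by auto
  have "last ws \<in> {\<alpha>,\<beta>,\<gamma>}"
    using succ_closed_last[OF W(1) g _ closure3] by simp
  then show False using W(2) abR by auto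
qed

lemma N'_sub: assumes "p \<in> Nset Q' \<sigma>' \<tau>'" shows "p \<in> Nset Q \<sigma> \<tau> \<and> p \<noteq> \<rho>"
proof (cases p)
  case (PTriv x e) then show ?thesis using assms by (simp add: Nset_iff antipath_def)
next
  case (ATriv x e)
  have "p \<in> Nset Q \<sigma> \<tau>"
  proof -
    have "\<And>a. a \<in> arrs Q \<Longrightarrow> a \<noteq> \<gamma>" using gn by auto
    then show ?thesis using assms ATriv by (auto simp: Nset_iff antipath_def sgtu)
  qed
  then show ?thesis using ATriv by simp
next
  case (Path ws)
  have W: "ws \<noteq> []" "set ws \<subseteq> insert \<gamma> (arrs Q)" "successively (\<lambda>a b. (a,b) \<in> rels Q') ws"
    "\<not> (\<exists>a. (a, hd ws) \<in> rels Q')" "\<not> (\<exists>b. (last ws, b) \<in> rels Q')"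
    using N_Path[OF sq'] assms Path by auto
  have g: "\<gamma> \<notin> set ws" using gfree_N' assms Path by simp
  have s: "set ws \<subseteq> arrs Q" using W(2) g by auto
  have "successively (\<lambda>a b. (a,b) \<in> rels Q) ws"
    by (rule successively_mono[OF W(3)]) (use g in auto)
  then have "Path ws \<in> Nset Q \<sigma> \<tau>" using W s N_Path[OF sq] by auto
  moreover have "Path ws \<noteq> \<rho>" using rho_not_N' assms Path by auto
  ultimately show ?thesis using Path by simp
qed

lemma N_sub': assumes "p \<in> Nset Q \<sigma> \<tau>" "p \<noteq> \<rho>" shows "p \<in> Nset Q' \<sigma>' \<tau>'"
proof (cases p)
  case (PTriv x e) then show ?thesis using assms by (simp add: Nset_iff antipath_def)
next
  case (ATriv x e)
  have A: "x \<in> verts Q" "e \<in> {1,-1}" "\<not> (\<exists>a\<in>arrs Q. src Q a = x \<and> \<sigma> a = e)"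
    "\<not> (\<exists>b\<in>arrs Q. tgt Q b = x \<and> \<tau> b = e)" using assms ATriv by (auto simp: Nset_iff antipath_def)
  have "\<not> (x = tgt Q \<alpha> \<and> e = \<tau> \<alpha>)" using A(4) ab by auto
  moreover have "\<not> (x = src Q \<beta> \<and> e = \<sigma> \<beta>)" using A(3) ab by auto
  moreover have "\<And>a. a \<in> arrs Q \<Longrightarrow> a \<noteq> \<gamma>" using gn by auto
  ultimately show ?thesis using A ATriv by (auto simp: Nset_iff antipath_def sgtu)
next
  case (Path ws)
  have W: "ws \<noteq> []" "set ws \<subseteq> arrs Q" "successively (\<lambda>a b. (a,b) \<in> rels Q) ws"
    "\<not> (\<exists>a. (a, hd ws) \<in> rels Q)" "\<not> (\<exists>b. (last ws, b) \<in> rels Q)"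
    using N_Path[OF sq] assms Path by auto
  have g: "hd ws \<noteq> \<gamma>" "last ws \<noteq> \<gamma>" using W(1,2) gn hdl[OF sq, of ws] by auto
  have "hd ws \<noteq> \<alpha>"
  proof
    assume "hd ws = \<alpha>"
    then have "p = \<rho>" using N_unique_T[OF sq assms(1) rhoN] Path by simp
    then show False using assms(2) by simp
  qed
  moreover have "last ws \<noteq> \<beta>"
  proof
    assume "last ws = \<beta>"
    then have "p = \<rho>" using N_unique_S[OF sq assms(1) rhoN] Path by simp
    then show False using assms(2) by simp
  qed
  moreover have "successively (\<lambda>a b. (a,b) \<in> rels Q') ws"
    by (rule successively_mono[OF W(3)]) auto
  ultimately have "Path ws \<in> Nset Q' \<sigma>' \<tau>'" using W g N_Path[OF sq'] by auto
  then show ?thesis using Path by simp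
qed

lemma N'_eq: "Nset Q' \<sigma>' \<tau>' = Nset Q \<sigma> \<tau> - {\<rho>}"
  using N'_sub N_sub' by blast

lemma alpha_only: assumes "Path ws \<in> Nset Q \<sigma> \<tau>" "\<alpha> \<in> set ws" shows "Path ws = \<rho>"
proof -
  obtain us vs where d: "ws = us @ \<alpha> # vs" using assms(2) by (auto simp: in_set_conv_decomp)
  have W: "successively (\<lambda>a b. (a,b) \<in> rels Q) ws" using N_Path[OF sq] assms by auto
  have "us = []"
  proof (rule ccontr)
    assume "us \<noteq> []"
    then have "(last us, \<alpha>) \<in> rels Q" using W d by (simp add: successively_append_iff)
    then show False using Tmax rel_iff[OF sq] by auto
  qed
  then show ?thesis using N_unique_T[OF sq assms(1) rhoN] d by simp
qed

lemma beta_only: assumes "Path ws \<in> Nset Q \<sigma> \<tau>" "\<beta> \<in> set ws" shows "Path ws = \<rho>"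
proof -
  obtain us vs where d: "ws = us @ \<beta> # vs" using assms(2) by (auto simp: in_set_conv_decomp)
  have W: "successively (\<lambda>a b. (a,b) \<in> rels Q) ws" using N_Path[OF sq] assms by auto
  have "vs = []"
  proof (rule ccontr)
    assume "vs \<noteq> []"
    then have "(\<beta>, hd vs) \<in> rels Q" using W d by (simp add: successively_append_iff successively_Cons)
    then show False using Smax rel_iff[OF sq] by auto
  qed
  then show ?thesis using N_unique_S[OF sq assms(1) rhoN] d by simp
qed

lemma abg_notC: "\<alpha> \<notin> Cset Q \<sigma> \<tau>" "\<beta> \<notin> Cset Q \<sigma> \<tau>" "\<gamma> \<notin> Cset Q \<sigma> \<tau>"
  using Cset_iff[OF sq] rhoN gn by auto

lemma C'_eq: "Cset Q' \<sigma>' \<tau>' = Cset Q \<sigma> \<tau> \<union> {\<alpha>, \<beta>, \<gamma>}"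
proof (intro equalityI subsetI)
  fix a assume a: "a \<in> Cset Q' \<sigma>' \<tau>'"
  then have a': "a \<in> insert \<gamma> (arrs Q)" "\<And>ws. Path ws \<in> Nset Q \<sigma> \<tau> - {\<rho>} \<Longrightarrow> a \<notin> set ws"
    using Cset_iff[OF sq'] N'_eq by auto
  show "a \<in> Cset Q \<sigma> \<tau> \<union> {\<alpha>, \<beta>, \<gamma>}"
  proof (cases "a \<in> {\<alpha>, \<beta>, \<gamma>}")
    case False
    then have "\<And>ws. Path ws \<in> Nset Q \<sigma> \<tau> \<Longrightarrow> a \<notin> set ws" using a'(2) by fastforce
    then show ?thesis using a'(1) False Cset_iff[OF sq] by auto
  qed blast
next
  fix a assume a: "a \<in> Cset Q \<sigma> \<tau> \<union> {\<alpha>, \<beta>, \<gamma>}"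
  have "a \<notin> set ws" if ws: "Path ws \<in> Nset Q \<sigma> \<tau>" "Path ws \<noteq> \<rho>" for ws
  proof -
    have "set ws \<subseteq> arrs Q" using ws N_Path[OF sq] by auto
    then show ?thesis
    proof (cases "a \<in> Cset Q \<sigma> \<tau>")
      case True then show ?thesis using Cset_iff[OF sq] ws(1) by blast
    next
      case False
      then have "a = \<alpha> \<or> a = \<beta> \<or> a = \<gamma>" using a by blast
      then show ?thesis using alpha_only[OF ws(1)] beta_only[OF ws(1)] ws(2) gn \<open>set ws \<subseteq> arrs Q\<close> by blast
    qed
  qed
  moreover have "a \<in> insert \<gamma> (arrs Q)" using a ab Cset_iff[OF sq] by auto
  ultimately show "a \<in> Cset Q' \<sigma>' \<tau>'" using Cset_iff[OF sq'] N'_eq by auto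
qed

lemma Psi'_C: assumes "a \<in> Cset Q \<sigma> \<tau>" shows "Psi Q' \<sigma>' \<tau>' a = Psi Q \<sigma> \<tau> a"
proof -
  have P: "Psi Q \<sigma> \<tau> a \<in> Cset Q \<sigma> \<tau>" "tgt Q (Psi Q \<sigma> \<tau> a) = src Q a" "\<tau> (Psi Q \<sigma> \<tau> a) = \<sigma> a"
    using Psi_in[OF gQ sQ assms] by auto
  have n: "a \<noteq> \<gamma>" "Psi Q \<sigma> \<tau> a \<noteq> \<gamma>" using P(1) assms abg_notC by auto
  show ?thesis by (rule Psi_eq[OF sq']) (use P n C'_eq in \<open>auto simp: sgtu\<close>)
qed

lemma Psi'_abg: "Psi Q' \<sigma>' \<tau>' \<alpha> = \<beta>" "Psi Q' \<sigma>' \<tau>' \<beta> = \<gamma>" "Psi Q' \<sigma>' \<tau>' \<gamma> = \<alpha>"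
  by (rule Psi_eq[OF sq']; use C'_eq ab neq in \<open>auto simp: sgtu\<close>)+

lemma Psi'_iter_C: assumes "a \<in> Cset Q \<sigma> \<tau>"
  shows "(Psi Q' \<sigma>' \<tau>' ^^ n) a = (Psi Q \<sigma> \<tau> ^^ n) a \<and> (Psi Q \<sigma> \<tau> ^^ n) a \<in> Cset Q \<sigma> \<tau>"
proof (induction n)
  case 0 then show ?case using assms by simp
next
  case (Suc n)
  define b where "b = (Psi Q \<sigma> \<tau> ^^ n) a"
  have b: "(Psi Q' \<sigma>' \<tau>' ^^ n) a = b" "b \<in> Cset Q \<sigma> \<tau>" using Suc b_def by auto
  have "(Psi Q' \<sigma>' \<tau>' ^^ Suc n) a = Psi Q' \<sigma>' \<tau>' b" using b(1) by simp
  also have "\<dots> = Psi Q \<sigma> \<tau> b" by (rule Psi'_C[OF b(2)])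
  also have "\<dots> = (Psi Q \<sigma> \<tau> ^^ Suc n) a" using b_def by simp
  finally show ?case using Psi_in[OF gQ sQ b(2)] b_def by simp
qed

lemma Psi'_iter_abg: assumes "a \<in> {\<alpha>,\<beta>,\<gamma>}" shows "(Psi Q' \<sigma>' \<tau>' ^^ n) a \<in> {\<alpha>,\<beta>,\<gamma>}"
proof (induction n)
  case 0 then show ?case using assms by simp
next
  case (Suc n)
  define z where "z = (Psi Q' \<sigma>' \<tau>' ^^ n) a"
  have z: "z \<in> {\<alpha>,\<beta>,\<gamma>}" using Suc z_def by blast
  have "(Psi Q' \<sigma>' \<tau>' ^^ Suc n) a = Psi Q' \<sigma>' \<tau>' z" using z_def by simp
  moreover have "Psi Q' \<sigma>' \<tau>' z \<in> {\<alpha>,\<beta>,\<gamma>}" using z Psi'_abg by (elim insertE) auto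
  ultimately show ?case by simp
qed

lemma orbit'_C: assumes "x \<in> Cset Q \<sigma> \<tau>"
  shows "orbit_on (Cset Q' \<sigma>' \<tau>') (Psi Q' \<sigma>' \<tau>') x = orbit_on (Cset Q \<sigma> \<tau>) (Psi Q \<sigma> \<tau>) x"
proof -
  have "y \<in> orbit_on (Cset Q' \<sigma>' \<tau>') (Psi Q' \<sigma>' \<tau>') x \<longleftrightarrow> y \<in> orbit_on (Cset Q \<sigma> \<tau>) (Psi Q \<sigma> \<tau>) x" for y
  proof (cases "y \<in> Cset Q \<sigma> \<tau>")
    case True
    then show ?thesis unfolding orbit_on_def using Psi'_iter_C[OF assms] Psi'_iter_C[OF True] C'_eq by auto
  next
    case False
    have "y \<notin> orbit_on (Cset Q' \<sigma>' \<tau>') (Psi Q' \<sigma>' \<tau>') x"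
    proof
      assume y: "y \<in> orbit_on (Cset Q' \<sigma>' \<tau>') (Psi Q' \<sigma>' \<tau>') x"
      then have yy: "y \<in> {\<alpha>,\<beta>,\<gamma>}" using False C'_eq unfolding orbit_on_def by auto
      from y obtain n where "(Psi Q' \<sigma>' \<tau>' ^^ n) x = y \<or> (Psi Q' \<sigma>' \<tau>' ^^ n) y = x"
        unfolding orbit_on_def by auto
      then show False using Psi'_iter_C[OF assms, of n] Psi'_iter_abg[OF yy, of n] yy False assms abg_notC
        by auto
    qed
    then show ?thesis using False unfolding orbit_on_def by auto
  qed
  then show ?thesis by blast
qed

lemma orbit'_abg: assumes "x \<in> {\<alpha>,\<beta>,\<gamma>}"
  shows "orbit_on (Cset Q' \<sigma>' \<tau>') (Psi Q' \<sigma>' \<tau>') x = {\<alpha>,\<beta>,\<gamma>}"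
proof -
  let ?f = "Psi Q' \<sigma>' \<tau>'"
  have f1: "(?f ^^ 1) z = ?f z" and f2: "(?f ^^ 2) z = ?f (?f z)" for z
    by (simp_all add: numeral_2_eq_2)
  have S3: "{x, ?f x, ?f (?f x)} = {\<alpha>,\<beta>,\<gamma>}" using assms Psi'_abg by auto
  have reach3: "\<exists>n. (?f ^^ n) x = y" if "y \<in> {\<alpha>,\<beta>,\<gamma>}" for y
  proof -
    have "y = x \<or> y = ?f x \<or> y = ?f (?f x)" using that S3 by blast
    moreover have "(?f ^^ 0) x = x" "(?f ^^ Suc 0) x = ?f x" "(?f ^^ Suc (Suc 0)) x = ?f (?f x)" by simp_all
    ultimately show ?thesis by metis
  qed
  have "y \<in> orbit_on (Cset Q' \<sigma>' \<tau>') ?f x \<longleftrightarrow> y \<in> {\<alpha>,\<beta>,\<gamma>}" for y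
  proof (cases "y \<in> {\<alpha>,\<beta>,\<gamma>}")
    case True
    then show ?thesis unfolding orbit_on_def using reach3 C'_eq by auto
  next
    case False
    have "y \<notin> orbit_on (Cset Q' \<sigma>' \<tau>') ?f x"
    proof
      assume y: "y \<in> orbit_on (Cset Q' \<sigma>' \<tau>') ?f x"
      then have yy: "y \<in> Cset Q \<sigma> \<tau>" using False C'_eq unfolding orbit_on_def by auto
      from y obtain n where "(?f ^^ n) x = y \<or> (?f ^^ n) y = x"
        unfolding orbit_on_def by auto
      then show False using Psi'_iter_C[OF yy, of n] Psi'_iter_abg[OF assms, of n] yy False assms abg_notC
        by auto
    qed
    then show ?thesis using False by auto
  qed
  then show ?thesis by blast
qed

lemma Corbits'_eq: "Corbits Q' \<sigma>' \<tau>' = Corbits Q \<sigma> \<tau> \<union> {{\<alpha>, \<beta>, \<gamma>}}"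
proof -
  have "Corbits Q' \<sigma>' \<tau>' = (\<lambda>x. orbit_on (Cset Q' \<sigma>' \<tau>') (Psi Q' \<sigma>' \<tau>') x) ` Cset Q \<sigma> \<tau> \<union>
      (\<lambda>x. orbit_on (Cset Q' \<sigma>' \<tau>') (Psi Q' \<sigma>' \<tau>') x) ` {\<alpha>,\<beta>,\<gamma>}"
    unfolding Corbits_def C'_eq by (rule image_Un)
  also have "(\<lambda>x. orbit_on (Cset Q' \<sigma>' \<tau>') (Psi Q' \<sigma>' \<tau>') x) ` Cset Q \<sigma> \<tau> = Corbits Q \<sigma> \<tau>"
    unfolding Corbits_def using orbit'_C by (intro image_cong) auto
  also have "(\<lambda>x. orbit_on (Cset Q' \<sigma>' \<tau>') (Psi Q' \<sigma>' \<tau>') x) ` {\<alpha>,\<beta>,\<gamma>} = {{\<alpha>,\<beta>,\<gamma>}}"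
    using orbit'_abg by auto
  finally show ?thesis .
qed

end


lemma gentle_intro:
  assumes sq: "sq Q \<sigma> \<tau>" and fv: "finite (verts Q)" and cq: "connected_quiv Q" and fa: "finite (arrs Q)"
    and b4: "\<exists>n\<ge>1. \<forall>ws. is_path Q ws \<and> length ws = n \<longrightarrow>
        (\<exists>i. Suc i < n \<and> (ws ! i, ws ! Suc i) \<in> rels Q)"
  shows "gentle Q"
proof -
  have c1: "card {a\<in>arrs Q. src Q a = x} \<le> 2" for x
  proof -
    have "inj_on \<sigma> {a\<in>arrs Q. src Q a = x}" using out_unique[OF sq] by (auto simp: inj_on_def)
    moreover have "\<sigma> ` {a\<in>arrs Q. src Q a = x} \<subseteq> {1,-1}" using sig_pm[OF sq] by auto
    ultimately have "card {a\<in>arrs Q. src Q a = x} \<le> card {1::int,-1}" by (rule card_inj_on_le) simp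
    then show ?thesis by simp
  qed
  have c2: "card {a\<in>arrs Q. tgt Q a = x} \<le> 2" for x
  proof -
    have "inj_on \<tau> {a\<in>arrs Q. tgt Q a = x}" using in_unique[OF sq] by (auto simp: inj_on_def)
    moreover have "\<tau> ` {a\<in>arrs Q. tgt Q a = x} \<subseteq> {1,-1}" using tau_pm[OF sq] by auto
    ultimately have "card {a\<in>arrs Q. tgt Q a = x} \<le> card {1::int,-1}" by (rule card_inj_on_le) simp
    then show ?thesis by simp
  qed
  have a1: "at_most_one (\<lambda>b. b \<in> arrs Q \<and> src Q b = tgt Q a \<and> (b, a) \<notin> rels Q)" if "a \<in> arrs Q" for a
    unfolding at_most_one_def
  proof (intro allI impI)
    fix x y assume xy: "(x \<in> arrs Q \<and> src Q x = tgt Q a \<and> (x, a) \<notin> rels Q) \<and> (y \<in> arrs Q \<and> src Q y = tgt Q a \<and> (y, a) \<notin> rels Q)"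
    then have "\<sigma> x = - \<tau> a" "\<sigma> y = - \<tau> a" using nrel_iff[OF sq] that by auto
    then show "x = y" using out_unique[OF sq] xy by auto
  qed
  have a2: "at_most_one (\<lambda>c. c \<in> arrs Q \<and> tgt Q c = src Q a \<and> (a, c) \<notin> rels Q)" if "a \<in> arrs Q" for a
    unfolding at_most_one_def
  proof (intro allI impI)
    fix x y assume xy: "(x \<in> arrs Q \<and> tgt Q x = src Q a \<and> (a, x) \<notin> rels Q) \<and> (y \<in> arrs Q \<and> tgt Q y = src Q a \<and> (a, y) \<notin> rels Q)"
    then have "\<sigma> a = - \<tau> x" "\<sigma> a = - \<tau> y" using nrel_iff[OF sq] that by auto
    then show "x = y" using in_unique[OF sq] xy by auto
  qed
  have a3: "at_most_one (\<lambda>b. (b, a) \<in> rels Q) \<and> at_most_one (\<lambda>c. (a, c) \<in> rels Q)" for a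
    unfolding at_most_one_def using R_inj[OF sq] R_fun[OF sq] by blast
  have fin1: "finite {a\<in>arrs Q. src Q a = x}" "finite {a\<in>arrs Q. tgt Q a = x}" for x
    using fa by auto
  have p: "\<forall>(a,b)\<in>rels Q. is_path Q [a, b]"
    using rel_iff[OF sq] unfolding is_path_def by auto
  have v: "\<forall>a\<in>arrs Q. src Q a \<in> verts Q \<and> tgt Q a \<in> verts Q" using verts_arr[OF sq] by blast
  show ?thesis unfolding gentle_def
    using fv v cq p c1 c2 fin1 a1 a2 a3 b4 by blast
qed

lemma succ_mid: "successively P (as @ bs @ cs) \<Longrightarrow> successively P bs"
  by (simp add: successively_append_iff)

lemma succ_mod:
  assumes "successively P xs" "xs \<noteq> []" "P (last xs) (hd xs)"
  shows "P (xs ! (i mod length xs)) (xs ! (Suc i mod length xs))"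
proof -
  let ?p = "length xs" let ?k = "i mod ?p"
  have kp: "?k < ?p" using assms(2) by simp
  show ?thesis
  proof (cases "Suc ?k < ?p")
    case True
    then have "Suc i mod ?p = Suc ?k" by (simp add: mod_Suc)
    then show ?thesis using successively_nth[OF assms(1) True] by simp
  next
    case False
    then have k: "Suc ?k = ?p" using kp by simp
    then have "Suc i mod ?p = 0" by (simp add: mod_Suc)
    moreover have "xs ! ?k = last xs" using k assms(2) by (metis diff_Suc_1 last_conv_nth)
    moreover have "xs ! 0 = hd xs" using assms(2) by (simp add: hd_conv_nth)
    ultimately show ?thesis using assms(3) by simp
  qed
qed

context sit
begin

abbreviation "m0 \<equiv> psi Q \<sigma> \<tau> \<rho>"

lemma m0: "m0 \<in> Mset Q \<sigma> \<tau>" "gsrc Q m0 = src Q \<beta>" "gsig \<sigma> m0 = - \<sigma> \<beta>"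
  using psi_in[OF gQ sQ rhoN] by auto

lemma Phi_rho_iff: "Phi Q \<sigma> \<tau> \<rho> = \<rho> \<longleftrightarrow> (gtgt Q m0 = tgt Q \<alpha> \<and> gtau \<tau> m0 = - \<tau> \<alpha>)"
proof
  assume "Phi Q \<sigma> \<tau> \<rho> = \<rho>"
  then have "phi Q \<sigma> \<tau> m0 = \<rho>" unfolding Phi_def by simp
  then show "gtgt Q m0 = tgt Q \<alpha> \<and> gtau \<tau> m0 = - \<tau> \<alpha>" using phi_in[OF gQ sQ m0(1)] by auto
next
  assume a: "gtgt Q m0 = tgt Q \<alpha> \<and> gtau \<tau> m0 = - \<tau> \<alpha>"
  have "phi Q \<sigma> \<tau> m0 = \<rho>" by (rule phi_eq[OF sq m0(1) rhoN]) (use a in auto)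
  then show "Phi Q \<sigma> \<tau> \<rho> = \<rho>" unfolding Phi_def by simp
qed

definition "P' a b \<longleftrightarrow> a \<in> arrs Q' \<and> b \<in> arrs Q' \<and> src Q' a = tgt Q' b \<and> (a,b) \<notin> rels Q'"

lemma P'_Q: "P' a b \<Longrightarrow> a \<noteq> \<gamma> \<Longrightarrow> b \<noteq> \<gamma> \<Longrightarrow> Pstep Q a b"
  unfolding P'_def Pstep_def by auto

lemma Q_P': "Pstep Q a b \<Longrightarrow> P' a b"
  unfolding P'_def Pstep_def using gn by auto

lemma not_gentle: assumes "Phi Q \<sigma> \<tau> \<rho> = \<rho>" shows "\<not> gentle Q'"
proof
  assume g': "gentle Q'"
  have T: "gtgt Q m0 = tgt Q \<alpha>" "gtau \<tau> m0 = - \<tau> \<alpha>" using assms Phi_rho_iff by auto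
  define L where "L = (case m0 of Path ws \<Rightarrow> ws | _ \<Rightarrow> [])"
  define cyc where "cyc = \<gamma> # L"
  have cyc: "successively P' cyc" "P' (last cyc) (hd cyc)" "set cyc \<subseteq> arrs Q'"
  proof -
    have "successively P' cyc \<and> P' (last cyc) (hd cyc) \<and> set cyc \<subseteq> arrs Q'"
    proof (cases m0)
      case (ATriv x e) then show ?thesis using m0(1) by (simp add: Mset_iff permitted_def)
    next
      case (PTriv x e)
      then have "x = src Q \<beta>" "e = - \<sigma> \<beta>" "x = tgt Q \<alpha>" "- e = - \<tau> \<alpha>" using m0 T by auto
      then have "P' \<gamma> \<gamma>" unfolding P'_def using neq rel_new by auto
      then show ?thesis using PTriv L_def cyc_def by simp
    next
      case (Path ws)
      have W: "ws \<noteq> []" "set ws \<subseteq> arrs Q" "successively (Pstep Q) ws"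
        using M_Path[OF sq] m0(1) Path by auto
      have h: "hd ws \<in> arrs Q" "last ws \<in> arrs Q" using W(1,2) by auto
      have "tgt Q (hd ws) = tgt Q \<alpha>" "\<tau> (hd ws) = - \<tau> \<alpha>" using T Path by auto
      then have "hd ws \<noteq> \<alpha>" using pm by auto
      then have p1: "P' \<gamma> (hd ws)" unfolding P'_def using h gn \<open>tgt Q (hd ws) = tgt Q \<alpha>\<close> rel_new by auto
      have "src Q (last ws) = src Q \<beta>" "\<sigma> (last ws) = - \<sigma> \<beta>" using m0 Path by auto
      then have "last ws \<noteq> \<beta>" using pm by auto
      then have p2: "P' (last ws) \<gamma>" unfolding P'_def using h gn \<open>src Q (last ws) = src Q \<beta>\<close> rel_new by auto
      have "successively P' ws" by (rule successively_mono[OF W(3)]) (rule Q_P')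
      then show ?thesis using p1 p2 W Path L_def cyc_def by (auto simp: successively_Cons)
    qed
    then show "successively P' cyc" "P' (last cyc) (hd cyc)" "set cyc \<subseteq> arrs Q'" by auto
  qed
  have cne: "cyc \<noteq> []" using cyc_def by simp
  define f where "f i = cyc ! (i mod length cyc)" for i
  have fP: "P' (f i) (f (Suc i))" for i using succ_mod[OF cyc(1) cne cyc(2)] f_def by simp
  have fA: "f i \<in> arrs Q'" for i
  proof -
    have "i mod length cyc < length cyc" using cne by simp
    then have "cyc ! (i mod length cyc) \<in> set cyc" by (rule nth_mem)
    then show ?thesis unfolding f_def using cyc(3) by blast
  qed
  obtain n where n: "n \<ge> 1" "\<forall>ws. is_path Q' ws \<and> length ws = n \<longrightarrow>
        (\<exists>i. Suc i < n \<and> (ws ! i, ws ! Suc i) \<in> rels Q')" using gD8[OF g'] by blast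
  define ws where "ws = map f [0..<n]"
  have "is_path Q' ws" unfolding is_path_def ws_def using n(1) fA fP unfolding P'_def by auto
  moreover have "length ws = n" using ws_def by simp
  ultimately obtain i where "Suc i < n" "(ws ! i, ws ! Suc i) \<in> rels Q'" using n(2) by blast
  then show False using fP[of i] unfolding ws_def P'_def by simp
qed


lemma seg_phi: assumes S: "successively P' (\<gamma> # xs @ [\<gamma>])" and g: "\<gamma> \<notin> set xs"
  shows "Phi Q \<sigma> \<tau> \<rho> = \<rho>"
proof -
  define m where "m = (if xs = [] then PTriv (src Q \<beta>) (- \<sigma> \<beta>) else Path xs)"
  have mM: "m \<in> Mset Q \<sigma> \<tau> \<and> gsrc Q m = src Q \<beta> \<and> gsig \<sigma> m = - \<sigma> \<beta> \<and> gtgt Q m = tgt Q \<alpha> \<and> gtau \<tau> m = - \<tau> \<alpha>"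
  proof (cases "xs = []")
    case True
    then have "P' \<gamma> \<gamma>" using S by simp
    then have e: "tgt Q \<alpha> = src Q \<beta>" "(\<gamma>, \<gamma>) \<notin> rels Q'" unfolding P'_def by auto
    have "(\<gamma>, \<gamma>) \<in> rels Q' \<longleftrightarrow> \<sigma>' \<gamma> = \<tau>' \<gamma>" using rel_iff[OF sq', of \<gamma> \<gamma>] e(1) by simp
    then have "\<tau> \<alpha> \<noteq> \<sigma> \<beta>" using e(2) by (simp add: sgtu)
    then have sb: "\<sigma> \<beta> = - \<tau> \<alpha>" using pm by auto
    have v: "src Q \<beta> \<in> verts Q" using verts_arr[OF sq] ab by auto
    have "PTriv (src Q \<beta>) (- \<sigma> \<beta>) \<in> Mset Q \<sigma> \<tau>"
      unfolding Mset_iff permitted_def using v pm Tmax Smax e(1) sb by auto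
    then show ?thesis using True m_def sb e(1) by simp
  next
    case False
    have S1: "successively P' xs" "P' \<gamma> (hd xs)" "P' (last xs) \<gamma>"
      using S False by (auto simp: successively_append_iff successively_Cons)
    have "set xs \<subseteq> arrs Q'" by (rule succ_set[OF sq S1(1) False]) (use S1(2) in \<open>auto simp: P'_def\<close>)
    then have xa: "set xs \<subseteq> arrs Q" using g by auto
    have SQ: "successively (Pstep Q) xs"
      by (rule successively_mono[OF S1(1)]) (use g P'_Q in blast)
    have h: "hd xs \<in> arrs Q" "last xs \<in> arrs Q" using xa False by auto
    have hg: "hd xs \<noteq> \<gamma>" "last xs \<noteq> \<gamma>" using h gn by auto
    have th: "tgt Q (hd xs) = tgt Q \<alpha>" "hd xs \<noteq> \<alpha>" using S1(2) hg unfolding P'_def by auto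
    then have tauh: "\<tau> (hd xs) = - \<tau> \<alpha>"
      using in_unique[OF sq h(1) ab(1) th(1)] tau_pm[OF sq h(1)] pm by auto
    have sl: "src Q (last xs) = src Q \<beta>" "last xs \<noteq> \<beta>" using S1(3) hg unfolding P'_def by auto
    then have sigl: "\<sigma> (last xs) = - \<sigma> \<beta>"
      using out_unique[OF sq h(2) ab(2) sl(1)] sig_pm[OF sq h(2)] pm by auto
    have n1: "\<not> (\<exists>a. Pstep Q a (hd xs))"
    proof
      assume "\<exists>a. Pstep Q a (hd xs)"
      then obtain a where a: "a \<in> arrs Q" "src Q a = tgt Q (hd xs)" "(a, hd xs) \<notin> rels Q"
        unfolding Pstep_def by blast
      then have "\<sigma> a = \<tau> \<alpha>" using nrel_iff[OF sq a(1) h(1) a(2)] tauh by simp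
      then show False using Tmax a th by auto
    qed
    have n2: "\<not> (\<exists>b. Pstep Q (last xs) b)"
    proof
      assume "\<exists>b. Pstep Q (last xs) b"
      then obtain b where b: "b \<in> arrs Q" "src Q (last xs) = tgt Q b" "(last xs, b) \<notin> rels Q"
        unfolding Pstep_def by blast
      then have "\<tau> b = \<sigma> \<beta>" using nrel_iff[OF sq h(2) b(1) b(2)] sigl by simp
      then show False using Smax b sl by auto
    qed
    have "Path xs \<in> Mset Q \<sigma> \<tau>" using M_Path[OF sq] False xa SQ n1 n2 by auto
    then show ?thesis using False m_def th tauh sl sigl by simp
  qed
  have "psi Q \<sigma> \<tau> \<rho> = m" by (rule psi_eq[OF sq rhoN]) (use mM in auto)
  then show ?thesis using Phi_rho_iff mM by simp
qed

lemma free_seg: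
  assumes n0: "\<forall>ws. is_path Q ws \<and> n0 \<le> length ws \<longrightarrow> (\<exists>i. Suc i < length ws \<and> (ws!i, ws!Suc i) \<in> rels Q)"
    and S: "successively P' seg" "\<gamma> \<notin> set seg" "set seg \<subseteq> arrs Q'"
  shows "length seg < Suc n0"
proof (rule ccontr)
  assume "\<not> length seg < Suc n0"
  then have len: "n0 \<le> length seg" "seg \<noteq> []" by auto
  have sa: "set seg \<subseteq> arrs Q" using S(2,3) by auto
  have SQ: "successively (Pstep Q) seg"
    by (rule successively_mono[OF S(1)]) (use S(2) P'_Q in blast)
  have "successively (\<lambda>a b. src Q a = tgt Q b) seg"
    by (rule successively_mono[OF SQ]) (simp add: Pstep_def)
  then have "is_path Q seg" using sa len unfolding is_path_succ by auto
  then obtain i where i: "Suc i < length seg" "(seg!i, seg!Suc i) \<in> rels Q" using n0 len by blast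
  then show False using successively_nth[OF SQ i(1)] by (simp add: Pstep_def)
qed

lemma bound': assumes "Phi Q \<sigma> \<tau> \<rho> \<noteq> \<rho>"
  shows "\<exists>n\<ge>1. \<forall>ws. is_path Q' ws \<and> length ws = n \<longrightarrow>
        (\<exists>i. Suc i < n \<and> (ws ! i, ws ! Suc i) \<in> rels Q')"
proof -
  obtain n0 where n0: "\<forall>ws. is_path Q ws \<and> n0 \<le> length ws \<longrightarrow> (\<exists>i. Suc i < length ws \<and> (ws!i, ws!Suc i) \<in> rels Q)"
    using gentle_bound[OF gQ] by blast
  define N where "N = 2 * Suc n0 + 1"
  have "\<exists>i. Suc i < N \<and> (ws ! i, ws ! Suc i) \<in> rels Q'" if ws: "is_path Q' ws" "length ws = N" for ws
  proof (rule ccontr)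
    assume nr: "\<not> (\<exists>i. Suc i < N \<and> (ws ! i, ws ! Suc i) \<in> rels Q')"
    have wa: "set ws \<subseteq> arrs Q'" using ws(1) unfolding is_path_def by blast
    have SP: "successively P' ws" unfolding successively_conv_nth
    proof (intro allI impI)
      fix i assume i: "Suc i < length ws"
      have "ws ! i \<in> set ws" "ws ! Suc i \<in> set ws" using i by simp_all
      then have "ws ! i \<in> arrs Q'" "ws ! Suc i \<in> arrs Q'" using wa by blast+
      moreover have "src Q' (ws ! i) = tgt Q' (ws ! Suc i)" using ws(1) i unfolding is_path_def by blast
      moreover have "(ws ! i, ws ! Suc i) \<notin> rels Q'" using nr i ws(2) by blast
      ultimately show "P' (ws ! i) (ws ! Suc i)" unfolding P'_def by blast
    qed
    show False
    proof (cases "\<gamma> \<in> set ws")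
      case False
      then show False using free_seg[OF n0 SP False wa] ws(2) N_def by simp
    next
      case True
      then obtain us vs where d: "ws = us @ \<gamma> # vs" "\<gamma> \<notin> set us" by (auto dest: split_list_first)
      show False
      proof (cases "\<gamma> \<in> set vs")
        case False
        have "successively P' us" "successively P' vs" using SP d(1)
          by (auto simp: successively_append_iff successively_Cons)
        then have "length us < Suc n0" "length vs < Suc n0"
          using free_seg[OF n0 _ d(2)] free_seg[OF n0 _ False] wa d(1) by auto
        then show False using ws(2) d(1) N_def by simp
      next
        case True
        then obtain xs ys where d2: "vs = xs @ \<gamma> # ys" "\<gamma> \<notin> set xs" by (auto dest: split_list_first)
        have "ws = us @ (\<gamma> # xs @ [\<gamma>]) @ ys" using d(1) d2(1) by simp
        then have "successively P' (\<gamma> # xs @ [\<gamma>])" using SP succ_mid by metis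
        then show False using seg_phi d2(2) assms by blast
      qed
    qed
  qed
  then show ?thesis using N_def by (intro exI[of _ N]) auto
qed

lemma connected': "connected_quiv Q'"
proof -
  let ?E = "{(src Q a, tgt Q a) | a. a \<in> arrs Q} \<union> {(tgt Q a, src Q a) | a. a \<in> arrs Q}"
  let ?E' = "{(src Q' a, tgt Q' a) | a. a \<in> arrs Q'} \<union> {(tgt Q' a, src Q' a) | a. a \<in> arrs Q'}"
  have "?E \<subseteq> ?E'"
  proof
    fix e assume "e \<in> ?E"
    then obtain a where a: "a \<in> arrs Q" "e = (src Q a, tgt Q a) \<or> e = (tgt Q a, src Q a)" by blast
    then have "a \<noteq> \<gamma>" using gn by auto
    then have eqs: "src Q' a = src Q a" "tgt Q' a = tgt Q a" by simp_all
    have a': "a \<in> arrs Q'" using a by simp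
    have "(src Q' a, tgt Q' a) \<in> ?E'" "(tgt Q' a, src Q' a) \<in> ?E'" using a' by blast+
    then have "(src Q a, tgt Q a) \<in> ?E'" "(tgt Q a, src Q a) \<in> ?E'" unfolding eqs .
    then show "e \<in> ?E'" using a(2) by blast
  qed
  then have sub: "?E\<^sup>* \<subseteq> ?E'\<^sup>*" by (rule rtrancl_mono)
  show ?thesis unfolding connected_quiv_def
  proof (intro ballI)
    fix x y assume "x \<in> verts Q'" "y \<in> verts Q'"
    then have "x \<in> verts Q" "y \<in> verts Q" by simp_all
    then have "(x,y) \<in> ?E\<^sup>*" using gD3[OF gQ] unfolding connected_quiv_def by blast
    then show "(x,y) \<in> ?E'\<^sup>*" using sub by blast
  qed
qed

lemma gentle': assumes "Phi Q \<sigma> \<tau> \<rho> \<noteq> \<rho>" shows "gentle Q'"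
  by (rule gentle_intro[OF sq' _ connected' _ bound'[OF assms]])
     (use gD1[OF gQ] gentle_finite_arrs[OF gQ] in simp_all)

end


definition lst :: "('v,'a) gpath \<Rightarrow> 'a list" where
  "lst p = (case p of Path ws \<Rightarrow> ws | _ \<Rightarrow> [])"

lemma M_cases: assumes "sq Q \<sigma> \<tau>" "p \<in> Mset Q \<sigma> \<tau>"
  shows "(\<exists>x e. p = PTriv x e) \<or> (\<exists>ws. p = Path ws \<and> ws \<noteq> [] \<and> set ws \<subseteq> arrs Q \<and> successively (Pstep Q) ws \<and>
     \<not> (\<exists>a. Pstep Q a (hd ws)) \<and> \<not> (\<exists>b. Pstep Q (last ws) b))"
proof (cases p)
  case (ATriv x e) then show ?thesis using assms(2) by (simp add: Mset_iff permitted_def)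
next
  case (Path ws) then show ?thesis using M_Path[OF assms(1)] assms(2) by auto
qed auto

context sit
begin

lemma P'_eq: "P' = Pstep Q'"
  by (intro ext) (simp add: P'_def Pstep_def)

definition gf :: "('v,'a) gpath \<Rightarrow> bool" where
  "gf p \<longleftrightarrow> (case p of Path ws \<Rightarrow> ws \<noteq> [] \<and> \<gamma> \<notin> set ws | _ \<Rightarrow> True)"

lemma gf_ports: assumes "gf p"
  shows "gtgt Q' p = gtgt Q p" "gsrc Q' p = gsrc Q p" "gsig \<sigma>' p = gsig \<sigma> p" "gtau \<tau>' p = gtau \<tau> p"
proof -
  have "gtgt Q' p = gtgt Q p \<and> gsrc Q' p = gsrc Q p \<and> gsig \<sigma>' p = gsig \<sigma> p \<and> gtau \<tau>' p = gtau \<tau> p"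
  proof (cases p)
    case (Path ws)
    then have "hd ws \<noteq> \<gamma>" "last ws \<noteq> \<gamma>" using assms unfolding gf_def by auto
    then show ?thesis using Path by (simp add: sgtu)
  qed simp_all
  then show "gtgt Q' p = gtgt Q p" "gsrc Q' p = gsrc Q p" "gsig \<sigma>' p = gsig \<sigma> p" "gtau \<tau>' p = gtau \<tau> p" by auto
qed

lemma gf_M: "p \<in> Mset Q \<sigma> \<tau> \<Longrightarrow> gf p"
  using M_cases[OF sq, of p] gn unfolding gf_def by auto

lemma gf_N: assumes "p \<in> Nset Q \<sigma> \<tau>" shows "gf p"
proof (cases p)
  case (Path ws) then show ?thesis using N_Path[OF sq] assms gn unfolding gf_def by auto
qed (simp_all add: gf_def)

lemma M_to_M':
  assumes p: "p \<in> Mset Q \<sigma> \<tau>" and t: "\<not> (gtgt Q p = tgt Q \<alpha> \<and> gtau \<tau> p = - \<tau> \<alpha>)"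
    and s: "\<not> (gsrc Q p = src Q \<beta> \<and> gsig \<sigma> p = - \<sigma> \<beta>)"
  shows "p \<in> Mset Q' \<sigma>' \<tau>'"
proof -
  have pe: "permitted Q' p"
  proof (cases p)
    case (PTriv x e) then show ?thesis using p by (simp add: Mset_iff permitted_def)
  next
    case (ATriv x e) then show ?thesis using p by (simp add: Mset_iff permitted_def)
  next
    case (Path ws)
    have W: "ws \<noteq> []" "set ws \<subseteq> arrs Q" "successively (Pstep Q) ws" using M_Path[OF sq] p Path by auto
    have "successively (Pstep Q') ws" unfolding P'_eq[symmetric]
      by (rule successively_mono[OF W(3)]) (rule Q_P')
    then show ?thesis using W Path permitted_Path'[OF sq'] by auto
  qed
  have g: "gf p" using gf_M[OF p] .
  have m1: "\<not> (\<exists>a\<in>arrs Q'. src Q' a = gtgt Q' p \<and> \<sigma>' a = - gtau \<tau>' p)"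
  proof
    assume "\<exists>a\<in>arrs Q'. src Q' a = gtgt Q' p \<and> \<sigma>' a = - gtau \<tau>' p"
    then obtain a where a0: "a \<in> arrs Q'" "src Q' a = gtgt Q' p" "\<sigma>' a = - gtau \<tau>' p" by blast
    then have a: "a \<in> arrs Q'" "src Q' a = gtgt Q p" "\<sigma>' a = - gtau \<tau> p" using gf_ports[OF g] by simp_all
    show False
    proof (cases "a = \<gamma>")
      case True then show False using a t by (auto simp: sgtu)
    next
      case False then show False using a p by (auto simp: Mset_iff sgtu)
    qed
  qed
  have m2: "\<not> (\<exists>b\<in>arrs Q'. tgt Q' b = gsrc Q' p \<and> \<tau>' b = - gsig \<sigma>' p)"
  proof
    assume "\<exists>b\<in>arrs Q'. tgt Q' b = gsrc Q' p \<and> \<tau>' b = - gsig \<sigma>' p"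
    then obtain b where b0: "b \<in> arrs Q'" "tgt Q' b = gsrc Q' p" "\<tau>' b = - gsig \<sigma>' p" by blast
    then have b: "b \<in> arrs Q'" "tgt Q' b = gsrc Q p" "\<tau>' b = - gsig \<sigma> p" using gf_ports[OF g] by simp_all
    show False
    proof (cases "b = \<gamma>")
      case True then show False using b s by (auto simp: sgtu)
    next
      case False then show False using b p by (auto simp: Mset_iff sgtu)
    qed
  qed
  show ?thesis using pe m1 m2 by (simp add: Mset_iff)
qed

lemma q_ports: assumes "q \<in> Nset Q \<sigma> \<tau>" "q \<noteq> \<rho>"
  shows "\<not> (gsrc Q (psi Q \<sigma> \<tau> q) = src Q \<beta> \<and> gsig \<sigma> (psi Q \<sigma> \<tau> q) = - \<sigma> \<beta>)"
proof
  assume a: "gsrc Q (psi Q \<sigma> \<tau> q) = src Q \<beta> \<and> gsig \<sigma> (psi Q \<sigma> \<tau> q) = - \<sigma> \<beta>"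
  then have "gsrc Q q = gsrc Q \<rho>" "gsig \<sigma> q = gsig \<sigma> \<rho>" using psi_in[OF gQ sQ assms(1)] by auto
  then have "q = \<rho>" using N_unique_S[OF sq assms(1) rhoN] by simp
  then show False using assms(2) by simp
qed

lemma Phi'_case1: assumes q: "q \<in> Nset Q \<sigma> \<tau>" "q \<noteq> \<rho>" and ne: "Phi Q \<sigma> \<tau> q \<noteq> \<rho>"
  shows "Phi Q' \<sigma>' \<tau>' q = Phi Q \<sigma> \<tau> q"
proof -
  define m where "m = psi Q \<sigma> \<tau> q"
  have m: "m \<in> Mset Q \<sigma> \<tau>" "gsrc Q m = gsrc Q q" "gsig \<sigma> m = - gsig \<sigma> q" using psi_in[OF gQ sQ q(1)] m_def by auto
  have pm_ne: "phi Q \<sigma> \<tau> m \<noteq> \<rho>" using ne m_def unfolding Phi_def by simp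
  have t: "\<not> (gtgt Q m = tgt Q \<alpha> \<and> gtau \<tau> m = - \<tau> \<alpha>)"
  proof
    assume a: "gtgt Q m = tgt Q \<alpha> \<and> gtau \<tau> m = - \<tau> \<alpha>"
    have "phi Q \<sigma> \<tau> m = \<rho>" by (rule phi_eq[OF sq m(1) rhoN]) (use a in auto)
    then show False using pm_ne by simp
  qed
  have m': "m \<in> Mset Q' \<sigma>' \<tau>'" using M_to_M'[OF m(1) t] q_ports[OF q] m_def by blast
  have q': "q \<in> Nset Q' \<sigma>' \<tau>'" using N'_eq q by simp
  have "psi Q' \<sigma>' \<tau>' q = m"
    by (rule psi_eq[OF sq' q' m']) (use m gf_ports[OF gf_M[OF m(1)]] gf_ports[OF gf_N[OF q(1)]] in simp_all)
  moreover have "phi Q' \<sigma>' \<tau>' m = phi Q \<sigma> \<tau> m"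
  proof -
    have p: "phi Q \<sigma> \<tau> m \<in> Nset Q \<sigma> \<tau>" "gtgt Q (phi Q \<sigma> \<tau> m) = gtgt Q m" "gtau \<tau> (phi Q \<sigma> \<tau> m) = - gtau \<tau> m"
      using phi_in[OF gQ sQ m(1)] by auto
    have p': "phi Q \<sigma> \<tau> m \<in> Nset Q' \<sigma>' \<tau>'" using N'_eq p(1) pm_ne by simp
    show ?thesis
      by (rule phi_eq[OF sq' m' p']) (use p gf_ports[OF gf_M[OF m(1)]] gf_ports[OF gf_N[OF p(1)]] in simp_all)
  qed
  ultimately show ?thesis unfolding Phi_def m_def by simp
qed

end


lemma lst_facts: assumes sq: "sq Q \<sigma> \<tau>" and p: "p \<in> Mset Q \<sigma> \<tau>"
  shows "(lst p = [] \<longrightarrow> p = PTriv (gsrc Q p) (gsig \<sigma> p) \<and> gtgt Q p = gsrc Q p \<and> gtau \<tau> p = - gsig \<sigma> p) \<and>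
         (lst p \<noteq> [] \<longrightarrow> p = Path (lst p) \<and> set (lst p) \<subseteq> arrs Q \<and> successively (Pstep Q) (lst p) \<and>
            \<not> (\<exists>a. Pstep Q a (hd (lst p))) \<and> \<not> (\<exists>b. Pstep Q (last (lst p)) b) \<and>
            gtgt Q p = tgt Q (hd (lst p)) \<and> gtau \<tau> p = \<tau> (hd (lst p)) \<and>
            gsrc Q p = src Q (last (lst p)) \<and> gsig \<sigma> p = \<sigma> (last (lst p)))"
  using M_cases[OF sq p] unfolding lst_def by auto

context sit
begin

lemma PgQ: assumes "b \<in> arrs Q" shows "Pstep Q' \<gamma> b \<longleftrightarrow> (tgt Q b = tgt Q \<alpha> \<and> \<tau> b = - \<tau> \<alpha>)"
proof -
  have bg: "b \<noteq> \<gamma>" using assms gn by auto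
  have "Pstep Q' \<gamma> b \<longleftrightarrow> tgt Q \<alpha> = tgt Q b \<and> b \<noteq> \<alpha>" unfolding Pstep_def using assms bg rel_new neq by auto
  also have "\<dots> \<longleftrightarrow> (tgt Q b = tgt Q \<alpha> \<and> \<tau> b = - \<tau> \<alpha>)"
  proof
    assume a: "tgt Q \<alpha> = tgt Q b \<and> b \<noteq> \<alpha>"
    then have "\<tau> b \<noteq> \<tau> \<alpha>" using in_unique[OF sq assms ab(1)] by auto
    then show "tgt Q b = tgt Q \<alpha> \<and> \<tau> b = - \<tau> \<alpha>" using a tau_pm[OF sq assms] pm by auto
  next
    assume a: "tgt Q b = tgt Q \<alpha> \<and> \<tau> b = - \<tau> \<alpha>"
    then show "tgt Q \<alpha> = tgt Q b \<and> b \<noteq> \<alpha>" using pm by auto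
  qed
  finally show ?thesis .
qed

lemma PQg: assumes "a \<in> arrs Q" shows "Pstep Q' a \<gamma> \<longleftrightarrow> (src Q a = src Q \<beta> \<and> \<sigma> a = - \<sigma> \<beta>)"
proof -
  have ag: "a \<noteq> \<gamma>" using assms gn by auto
  have "Pstep Q' a \<gamma> \<longleftrightarrow> src Q a = src Q \<beta> \<and> a \<noteq> \<beta>" unfolding Pstep_def using assms ag rel_new neq by auto
  also have "\<dots> \<longleftrightarrow> (src Q a = src Q \<beta> \<and> \<sigma> a = - \<sigma> \<beta>)"
  proof
    assume b: "src Q a = src Q \<beta> \<and> a \<noteq> \<beta>"
    then have "\<sigma> a \<noteq> \<sigma> \<beta>" using out_unique[OF sq assms ab(2)] by auto
    then show "src Q a = src Q \<beta> \<and> \<sigma> a = - \<sigma> \<beta>" using b sig_pm[OF sq assms] pm by auto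
  next
    assume b: "src Q a = src Q \<beta> \<and> \<sigma> a = - \<sigma> \<beta>"
    then show "src Q a = src Q \<beta> \<and> a \<noteq> \<beta>" using pm by auto
  qed
  finally show ?thesis .
qed

lemma Pgg: "Pstep Q' \<gamma> \<gamma> \<longleftrightarrow> (tgt Q \<alpha> = src Q \<beta> \<and> \<sigma> \<beta> = - \<tau> \<alpha>)"
proof -
  have "Pstep Q' \<gamma> \<gamma> \<longleftrightarrow> tgt Q \<alpha> = src Q \<beta>" unfolding Pstep_def using rel_new neq by auto
  moreover have "tgt Q \<alpha> = src Q \<beta> \<Longrightarrow> \<sigma> \<beta> = - \<tau> \<alpha>"
  proof -
    assume "tgt Q \<alpha> = src Q \<beta>"
    then have "\<sigma> \<beta> \<noteq> \<tau> \<alpha>" using Tmax ab by auto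
    then show ?thesis using pm by auto
  qed
  ultimately show ?thesis by blast
qed

lemma PQQ: "a \<in> arrs Q \<Longrightarrow> b \<in> arrs Q \<Longrightarrow> Pstep Q' a b \<longleftrightarrow> Pstep Q a b"
  unfolding Pstep_def using gn by auto

lemma Phi'_case2: assumes q: "q \<in> Nset Q \<sigma> \<tau>" "q \<noteq> \<rho>" and e: "Phi Q \<sigma> \<tau> q = \<rho>" and ne: "Phi Q \<sigma> \<tau> \<rho> \<noteq> \<rho>"
  shows "Phi Q' \<sigma>' \<tau>' q = Phi Q \<sigma> \<tau> \<rho>"
proof -
  define m where "m = psi Q \<sigma> \<tau> q"
  have m: "m \<in> Mset Q \<sigma> \<tau>" "gsrc Q m = gsrc Q q" "gsig \<sigma> m = - gsig \<sigma> q" using psi_in[OF gQ sQ q(1)] m_def by auto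
  have pm_e: "phi Q \<sigma> \<tau> m = \<rho>" using e m_def unfolding Phi_def by simp
  have Tm: "gtgt Q m = tgt Q \<alpha>" "gtau \<tau> m = - \<tau> \<alpha>" using phi_in[OF gQ sQ m(1)] pm_e by auto
  have Sm: "\<not> (gsrc Q m = src Q \<beta> \<and> gsig \<sigma> m = - \<sigma> \<beta>)" using q_ports[OF q] m_def by simp
  have T0: "\<not> (gtgt Q m0 = tgt Q \<alpha> \<and> gtau \<tau> m0 = - \<tau> \<alpha>)" using Phi_rho_iff ne by simp
  define L1 where "L1 = lst m0"
  define L2 where "L2 = lst m"
  note F1 = lst_facts[OF sq m0(1), folded L1_def]
  note F2 = lst_facts[OF sq m(1), folded L2_def]
  define c :: "('v,'a) gpath" where "c = Path (L1 @ \<gamma> # L2)"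
  have L1a: "set L1 \<subseteq> arrs Q" "successively (Pstep Q) L1" using F1 by (cases "L1 = []"; simp)+
  have L2a: "set L2 \<subseteq> arrs Q" "successively (Pstep Q) L2" using F2 by (cases "L2 = []"; simp)+
  have R3: "successively (Pstep Q') (L1 @ \<gamma> # L2)"
  proof -
    have s1: "successively (Pstep Q') L1" by (rule successively_mono[OF L1a(2)]) (use PQQ L1a(1) in blast)
    have s2: "successively (Pstep Q') L2" by (rule successively_mono[OF L2a(2)]) (use PQQ L2a(1) in blast)
    have l1: "L1 = [] \<or> Pstep Q' (last L1) \<gamma>"
    proof (cases "L1 = []")
      case False
      then have "last L1 \<in> arrs Q" "src Q (last L1) = src Q \<beta>" "\<sigma> (last L1) = - \<sigma> \<beta>"
        using F1 m0 L1a(1) by auto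
      then show ?thesis using PQg by blast
    qed simp
    have l2: "L2 = [] \<or> Pstep Q' \<gamma> (hd L2)"
    proof (cases "L2 = []")
      case False
      then have "hd L2 \<in> arrs Q" "tgt Q (hd L2) = tgt Q \<alpha>" "\<tau> (hd L2) = - \<tau> \<alpha>"
        using F2 Tm L2a(1) by auto
      then show ?thesis using PgQ by blast
    qed simp
    show ?thesis using s1 s2 l1 l2 by (auto simp: successively_append_iff successively_Cons)
  qed
  have R4: "\<not> (\<exists>a. Pstep Q' a (hd (L1 @ \<gamma> # L2)))"
  proof
    assume "\<exists>a. Pstep Q' a (hd (L1 @ \<gamma> # L2))"
    then obtain a where a: "Pstep Q' a (hd (L1 @ \<gamma> # L2))" by blast
    show False
    proof (cases "L1 = []")
      case False
      then have a': "Pstep Q' a (hd L1)" and h: "hd L1 \<in> arrs Q" using a L1a(1) by auto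
      show False
      proof (cases "a = \<gamma>")
        case True
        then have "tgt Q (hd L1) = tgt Q \<alpha> \<and> \<tau> (hd L1) = - \<tau> \<alpha>" using PgQ[OF h] a' by simp
        then show False using T0 F1 False by simp
      next
        case aF: False
        then have "a \<in> arrs Q" using a' unfolding Pstep_def by simp
        then have "Pstep Q a (hd L1)" using PQQ h a' by blast
        then show False using F1 False by blast
      qed
    next
      case True
      then have a': "Pstep Q' a \<gamma>" using a by simp
      have m0t: "m0 = PTriv (src Q \<beta>) (- \<sigma> \<beta>)" using F1 True m0 by simp
      show False
      proof (cases "a = \<gamma>")
        case aT: True
        then have "tgt Q \<alpha> = src Q \<beta> \<and> \<sigma> \<beta> = - \<tau> \<alpha>" using Pgg a' by simp
        then show False using T0 m0t by simp
      next
        case aF: False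
        then have aa: "a \<in> arrs Q" using a' unfolding Pstep_def by simp
        then have "src Q a = src Q \<beta> \<and> \<sigma> a = - \<sigma> \<beta>" using PQg a' by blast
        then show False using m0(1) m0t aa by (auto simp: Mset_iff)
      qed
    qed
  qed
  have R5: "\<not> (\<exists>b. Pstep Q' (last (L1 @ \<gamma> # L2)) b)"
  proof
    assume "\<exists>b. Pstep Q' (last (L1 @ \<gamma> # L2)) b"
    then obtain b where b: "Pstep Q' (last (L1 @ \<gamma> # L2)) b" by blast
    show False
    proof (cases "L2 = []")
      case False
      then have b': "Pstep Q' (last L2) b" and h: "last L2 \<in> arrs Q" using b L2a(1) by auto
      show False
      proof (cases "b = \<gamma>")
        case True
        then have "src Q (last L2) = src Q \<beta> \<and> \<sigma> (last L2) = - \<sigma> \<beta>" using PQg[OF h] b' by simp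
        then show False using Sm F2 False by simp
      next
        case bF: False
        then have "b \<in> arrs Q" using b' unfolding Pstep_def by simp
        then have "Pstep Q (last L2) b" using PQQ h b' by blast
        then show False using F2 False by blast
      qed
    next
      case True
      then have b': "Pstep Q' \<gamma> b" using b by simp
      have mt: "m = PTriv (tgt Q \<alpha>) (\<tau> \<alpha>)" using F2 True Tm by auto
      show False
      proof (cases "b = \<gamma>")
        case bT: True
        then have "tgt Q \<alpha> = src Q \<beta> \<and> \<sigma> \<beta> = - \<tau> \<alpha>" using Pgg b' by simp
        then show False using Sm mt by simp
      next
        case bF: False
        then have bb: "b \<in> arrs Q" using b' unfolding Pstep_def by simp
        then have "tgt Q b = tgt Q \<alpha> \<and> \<tau> b = - \<tau> \<alpha>" using PgQ b' by blast
        then show False using m(1) mt bb by (auto simp: Mset_iff)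
      qed
    qed
  qed
  have cM: "c \<in> Mset Q' \<sigma>' \<tau>'"
    unfolding c_def using M_Path[OF sq'] R3 R4 R5 L1a(1) L2a(1) by auto
  have cS: "gsrc Q' c = gsrc Q m" "gsig \<sigma>' c = gsig \<sigma> m"
  proof -
    have "gsrc Q' c = gsrc Q m \<and> gsig \<sigma>' c = gsig \<sigma> m"
    proof (cases "L2 = []")
      case True
      then have "m = PTriv (tgt Q \<alpha>) (\<tau> \<alpha>)" using F2 Tm by auto
      then show ?thesis using True c_def by (simp add: sgtu)
    next
      case False
      then have "last L2 \<noteq> \<gamma>" using L2a(1) gn last_in_set[of L2] by blast
      then show ?thesis using False c_def F2 by (simp add: sgtu)
    qed
    then show "gsrc Q' c = gsrc Q m" "gsig \<sigma>' c = gsig \<sigma> m" by auto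
  qed
  have cT: "gtgt Q' c = gtgt Q m0" "gtau \<tau>' c = gtau \<tau> m0"
  proof -
    have "gtgt Q' c = gtgt Q m0 \<and> gtau \<tau>' c = gtau \<tau> m0"
    proof (cases "L1 = []")
      case True
      then have "m0 = PTriv (src Q \<beta>) (- \<sigma> \<beta>)" using F1 m0 by simp
      then show ?thesis using True c_def by (simp add: sgtu)
    next
      case False
      then have "hd L1 \<noteq> \<gamma>" using L1a(1) gn hd_in_set[of L1] by blast
      then show ?thesis using False c_def F1 by (simp add: sgtu)
    qed
    then show "gtgt Q' c = gtgt Q m0" "gtau \<tau>' c = gtau \<tau> m0" by auto
  qed
  have q': "q \<in> Nset Q' \<sigma>' \<tau>'" using N'_eq q by simp
  have "psi Q' \<sigma>' \<tau>' q = c"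
    by (rule psi_eq[OF sq' q' cM]) (use cS m gf_ports[OF gf_N[OF q(1)]] in simp_all)
  moreover have "phi Q' \<sigma>' \<tau>' c = Phi Q \<sigma> \<tau> \<rho>"
  proof -
    have p: "phi Q \<sigma> \<tau> m0 \<in> Nset Q \<sigma> \<tau>" "gtgt Q (phi Q \<sigma> \<tau> m0) = gtgt Q m0" "gtau \<tau> (phi Q \<sigma> \<tau> m0) = - gtau \<tau> m0"
      using phi_in[OF gQ sQ m0(1)] by auto
    have pr: "Phi Q \<sigma> \<tau> \<rho> = phi Q \<sigma> \<tau> m0" unfolding Phi_def by simp
    have p': "phi Q \<sigma> \<tau> m0 \<in> Nset Q' \<sigma>' \<tau>'" using N'_eq p(1) ne pr by simp
    show ?thesis unfolding pr
      by (rule phi_eq[OF sq' cM p']) (use p cT gf_ports[OF gf_N[OF p(1)]] in simp_all)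
  qed
  ultimately show ?thesis unfolding Phi_def by simp
qed

lemma Phi'_formula: assumes ne: "Phi Q \<sigma> \<tau> \<rho> \<noteq> \<rho>" and q: "q \<in> Nset Q \<sigma> \<tau> - {\<rho>}"
  shows "Phi Q' \<sigma>' \<tau>' q = (if Phi Q \<sigma> \<tau> q = \<rho> then Phi Q \<sigma> \<tau> \<rho> else Phi Q \<sigma> \<tau> q)"
  using Phi'_case1 Phi'_case2 ne q by auto

end


theorem lemma4p1:
  fixes Q :: "('v,'a) quiv" and \<sigma> \<tau> :: "'a \<Rightarrow> int" and \<alpha> \<beta> \<gamma> :: 'a
  assumes "gentle Q" and "sign_fns Q \<sigma> \<tau>" and "isolated Q \<sigma> \<tau> \<alpha> \<beta>" and "\<gamma> \<notin> arrs Q"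
  defines "Q' \<equiv> complete Q \<alpha> \<beta> \<gamma>"
    and "\<sigma>' \<equiv> \<sigma>(\<gamma> := \<tau> \<alpha>)"
    and "\<tau>' \<equiv> \<tau>(\<gamma> := \<sigma> \<beta>)"
    and "\<rho> \<equiv> Path [\<alpha>, \<beta>]"
    and "Orb \<equiv> orbit_on (Nset Q \<sigma> \<tau>) (Phi Q \<sigma> \<tau>) (Path [\<alpha>, \<beta>])"
  shows "(gentle Q' \<longleftrightarrow> Orb \<noteq> {\<rho>}) \<and>
         (Orb \<noteq> {\<rho>} \<longrightarrow>
            Nset Q' \<sigma>' \<tau>' = Nset Q \<sigma> \<tau> - {\<rho>} \<and>
            Norbits Q' \<sigma>' \<tau>' = {O' \<in> Norbits Q \<sigma> \<tau>. O' \<noteq> Orb} \<union> {Orb - {\<rho>}} \<and>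
            Cset Q' \<sigma>' \<tau>' = Cset Q \<sigma> \<tau> \<union> {\<alpha>, \<beta>, \<gamma>} \<and>
            Corbits Q' \<sigma>' \<tau>' = Corbits Q \<sigma> \<tau> \<union> {{\<alpha>, \<beta>, \<gamma>}})"
proof -
  interpret S: sit Q \<sigma> \<tau> \<alpha> \<beta> \<gamma> using assms(1-4) by unfold_locales
  have e1: "\<sigma>' = S.sg'" unfolding \<sigma>'_def S.sg'_def ..
  have e2: "\<tau>' = S.tu'" unfolding \<tau>'_def S.tu'_def ..
  interpret P: permA "Nset Q \<sigma> \<tau>" "Phi Q \<sigma> \<tau>" by (rule permN[OF assms(1,2)])
  have orb: "Orb \<noteq> {\<rho>} \<longleftrightarrow> Phi Q \<sigma> \<tau> \<rho> \<noteq> \<rho>"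
    using P.orbit_single[OF S.rhoN] unfolding Orb_def \<rho>_def by simp
  have g1: "gentle Q' \<longleftrightarrow> Phi Q \<sigma> \<tau> \<rho> \<noteq> \<rho>"
    unfolding Q'_def \<rho>_def using S.gentle' S.not_gentle by blast
  have part1: "gentle Q' \<longleftrightarrow> Orb \<noteq> {\<rho>}" using g1 orb by simp
  have part2: "Nset Q' \<sigma>' \<tau>' = Nset Q \<sigma> \<tau> - {\<rho>} \<and>
            Norbits Q' \<sigma>' \<tau>' = {O' \<in> Norbits Q \<sigma> \<tau>. O' \<noteq> Orb} \<union> {Orb - {\<rho>}} \<and>
            Cset Q' \<sigma>' \<tau>' = Cset Q \<sigma> \<tau> \<union> {\<alpha>, \<beta>, \<gamma>} \<and>
            Corbits Q' \<sigma>' \<tau>' = Corbits Q \<sigma> \<tau> \<union> {{\<alpha>, \<beta>, \<gamma>}}" if o: "Orb \<noteq> {\<rho>}"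
  proof -
    have ne: "Phi Q \<sigma> \<tau> \<rho> \<noteq> \<rho>" using o orb by simp
    have N: "Nset Q' \<sigma>' \<tau>' = Nset Q \<sigma> \<tau> - {\<rho>}" unfolding Q'_def e1 e2 \<rho>_def by (rule S.N'_eq)
    interpret D: permA_del "Nset Q \<sigma> \<tau>" "Phi Q \<sigma> \<tau>" \<rho> "Phi Q' \<sigma>' \<tau>'"
    proof
      show "\<rho> \<in> Nset Q \<sigma> \<tau>" using S.rhoN \<rho>_def by simp
      show "Phi Q \<sigma> \<tau> \<rho> \<noteq> \<rho>" by (rule ne)
      show "Phi Q' \<sigma>' \<tau>' x = (if Phi Q \<sigma> \<tau> x = \<rho> then Phi Q \<sigma> \<tau> \<rho> else Phi Q \<sigma> \<tau> x)"
        if "x \<in> Nset Q \<sigma> \<tau> - {\<rho>}" for x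
        using S.Phi'_formula[OF ne[unfolded \<rho>_def]] that unfolding Q'_def e1 e2 \<rho>_def by blast
    qed
    have NO: "Norbits Q' \<sigma>' \<tau>' = {O' \<in> Norbits Q \<sigma> \<tau>. O' \<noteq> Orb} \<union> {Orb - {\<rho>}}"
    proof -
      have Orb': "Orb = orbit_on (Nset Q \<sigma> \<tau>) (Phi Q \<sigma> \<tau>) \<rho>" unfolding Orb_def \<rho>_def ..
      show ?thesis unfolding Norbits_def N Orb' using D.orbits_g by simp
    qed
    have C: "Cset Q' \<sigma>' \<tau>' = Cset Q \<sigma> \<tau> \<union> {\<alpha>, \<beta>, \<gamma>}" unfolding Q'_def e1 e2 by (rule S.C'_eq)
    have CO: "Corbits Q' \<sigma>' \<tau>' = Corbits Q \<sigma> \<tau> \<union> {{\<alpha>, \<beta>, \<gamma>}}" unfolding Q'_def e1 e2 by (rule S.Corbits'_eq)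
    show ?thesis using N NO C CO by blast
  qed
  show ?thesis using part1 part2 by blast
qed


end
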